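(* For any $t>0$ and $x,y\in\mathbb{R}^d$, $$\int_{B(y,|x-y|/2)}p(t,x,z)p(t,z,y)\,dz\le\frac{p(2t,x,y)}{2}.$$
   Context: Let $d\ge1$ be an integer and $\alpha\in(0,d\wedge2)$. $p(t,x,y)=p(t,x-y)$ is the heat kernel of $\Delta^{\alpha/2}=-(-\Delta)^{\alpha/2}$ on $\mathbb{R}^d$ (transition density of the rotationally symmetric $\alpha$-stable process). $B(y,r)$ is the open ball of radius $r$ centered at $y$. *)

theory Defs
  imports "HOL-Analysis.Analysis"
begin

text \<open>Heat kernel of the fractional Laplacian \<open>-(-\<Delta>)^(\<alpha>/2)\<close> on the Euclidean space
  'a (dimension d = DIM('a)), i.e. the transition density p(t,x) of the rotationally
  symmetric \<alpha>-stable process, defined by Fourier inversion: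
  p(t,x) = (2 pi)^(-d) * integral over R^d of exp(-t |xi|^alpha) cos(xi . x) d xi.\<close>
definition stable_hk :: "real \<Rightarrow> real \<Rightarrow> 'a::euclidean_space \<Rightarrow> real" where
  "stable_hk \<alpha> t x =
     (1 / (2 * pi) ^ DIM('a)) *
     (\<integral>\<xi>. exp (- t * (norm \<xi> powr \<alpha>)) * cos (\<xi> \<bullet> x) \<partial>lborel)"

definition stable_hk2 :: "real \<Rightarrow> real \<Rightarrow> 'a::euclidean_space \<Rightarrow> 'a \<Rightarrow> real" where
  "stable_hk2 \<alpha> t x y = stable_hk \<alpha> t (x - y)"

end

theory Submission
  imports Defs "HOL-Probability.Probability" "HOL-Real_Asymp.Real_Asymp"
begin

lemma gauss1_std:
  "has_bochner_integral lborel (\<lambda>x. complex_of_real (std_normal_density x) * iexp (t * x))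
     (complex_of_real (exp (- (t^2) / 2)))"
proof -
  have m: "(\<lambda>x. complex_of_real (std_normal_density x) * iexp (t * x)) \<in> borel_measurable lborel"
    by measurable
  have i: "integrable lborel (\<lambda>x. complex_of_real (std_normal_density x) * iexp (t * x))"
    apply (rule Bochner_Integration.integrable_bound[OF integrable_normal_density[where \<mu>=0 and \<sigma>=1]])
    using m apply simp
    by (auto simp: norm_mult)
  have "char std_normal_distribution t = complex_of_real (exp (- (t^2) / 2))"
    by (simp add: char_std_normal_distribution)
  moreover have "char std_normal_distribution t = (CLINT x|lborel. complex_of_real (std_normal_density x) * iexp (t * x))"
    unfolding char_def
    by (subst integral_density) (auto simp: scaleR_conv_of_real)
  ultimately show ?thesis using i by (simp add: has_bochner_integral_iff)
qed

lemma gauss1: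
  fixes a z :: real assumes a: "a > 0"
  shows "has_bochner_integral lborel (\<lambda>s. complex_of_real (exp (- a * s^2)) * iexp (z * s))
     (complex_of_real (sqrt (pi / a) * exp (- (z^2) / (4 * a))))"
proof -
  define c where "c = sqrt (2 * a)"
  have c: "c > 0" "c^2 = 2 * a" using a by (auto simp: c_def)
  define h where "h = (\<lambda>x. complex_of_real (std_normal_density x) * iexp ((z / c) * x))"
  have H: "has_bochner_integral lborel h (complex_of_real (exp (- ((z/c)^2) / 2)))"
    unfolding h_def by (rule gauss1_std)
  have ih: "integrable lborel h" using H by (simp add: has_bochner_integral_iff)
  have ih2: "integrable lborel (\<lambda>s. h (0 + c * s))"
    by (rule lborel_integrable_real_affine[OF ih]) (use c in auto)
  have eq1: "integral\<^sup>L lborel h = \<bar>c\<bar> *\<^sub>R integral\<^sup>L lborel (\<lambda>s. h (0 + c * s))"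
    by (rule lborel_integral_real_affine) (use c in auto)
  have hs: "h (c * s) = complex_of_real (1 / sqrt (2 * pi)) * (complex_of_real (exp (- a * s^2)) * iexp (z * s))" for s
  proof -
    have "(c * s)^2 / 2 = a * s^2" using c by (simp add: power_mult_distrib)
    moreover have "z / c * (c * s) = z * s" using c by simp
    ultimately show ?thesis unfolding h_def std_normal_density_def
      by (simp add: exp_minus)
  qed
  have fr: "(\<lambda>s. complex_of_real (exp (- a * s^2)) * iexp (z * s)) = (\<lambda>s. complex_of_real (sqrt (2 * pi)) * h (0 + c * s))"
    by (rule ext) (simp add: hs)
  have int: "integrable lborel (\<lambda>s. complex_of_real (exp (- a * s^2)) * iexp (z * s))"
    unfolding fr using ih2 by simp
  have "(CLINT s|lborel. complex_of_real (exp (- a * s^2)) * iexp (z * s))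
      = complex_of_real (sqrt (2 * pi)) * integral\<^sup>L lborel (\<lambda>s. h (0 + c * s))"
    unfolding fr by simp
  also have "integral\<^sup>L lborel (\<lambda>s. h (0 + c * s)) = complex_of_real (1 / c) * integral\<^sup>L lborel h"
    using eq1 c by (simp add: scaleR_conv_of_real)
  also have "integral\<^sup>L lborel h = complex_of_real (exp (- ((z/c)^2) / 2))"
    using H by (simp add: has_bochner_integral_iff)
  also have "complex_of_real (sqrt (2 * pi)) * (complex_of_real (1 / c) * complex_of_real (exp (- ((z/c)^2) / 2)))
     = complex_of_real (sqrt (pi / a) * exp (- (z^2) / (4 * a)))"
  proof -
    have h1: "sqrt (2 * pi) / c = sqrt (pi / a)" using a unfolding c_def
      by (simp add: real_sqrt_divide[symmetric])
    have h2: "- ((z/c)^2) / 2 = - (z^2) / (4 * a)" using c a by (simp add: power_divide c(2))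
    have R1: "sqrt (2 * pi) * ((1 / c) * exp (- ((z/c)^2) / 2)) = (sqrt (2 * pi) / c) * exp (- ((z/c)^2) / 2)"
      by simp
    have R: "sqrt (2 * pi) * ((1 / c) * exp (- ((z/c)^2) / 2)) = sqrt (pi / a) * exp (- (z^2) / (4 * a))"
      by (subst R1) (simp only: h1 h2)
    show ?thesis using R by (simp only: of_real_mult[symmetric])
  qed
  finally show ?thesis using int by (simp add: has_bochner_integral_iff)
qed

interpretation lborel_prod: product_sigma_finite "\<lambda>_. lborel"
  by standard

lemma lborel_prod_bochner:
  fixes f :: "'a::euclidean_space \<Rightarrow> real \<Rightarrow> complex"
  assumes int: "\<And>b. b \<in> Basis \<Longrightarrow> integrable lborel (f b)"
  shows "integrable lborel (\<lambda>x::'a. \<Prod>b\<in>Basis. f b (x \<bullet> b))"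
    and "(\<integral>x. (\<Prod>b\<in>Basis. f b (x \<bullet> b)) \<partial>(lborel::'a measure)) = (\<Prod>b\<in>Basis. integral\<^sup>L lborel (f b))"
proof -
  let ?T = "\<lambda>y::'a \<Rightarrow> real. \<Sum>b\<in>Basis. y b *\<^sub>R b"
  have [measurable]: "f b \<in> borel_measurable borel" if "b \<in> Basis" for b
    using int[OF that] by auto
  have Tm: "?T \<in> measurable (\<Pi>\<^sub>M b\<in>Basis. lborel) borel" by measurable
  have gm: "(\<lambda>x::'a. \<Prod>b\<in>Basis. f b (x \<bullet> b)) \<in> borel_measurable borel"
    by measurable
  have comp: "(\<Prod>b\<in>Basis. f b (?T y \<bullet> b)) = (\<Prod>b\<in>Basis. f b (y b))" for y
    by (intro prod.cong refl) (simp add: inner_sum_left inner_Basis if_distrib sum.If_cases)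
  have pi: "integrable (\<Pi>\<^sub>M b\<in>Basis. lborel) (\<lambda>y. \<Prod>b\<in>Basis. f b (y b))"
    by (rule lborel_prod.product_integrable_prod) (auto intro: int)
  show "integrable lborel (\<lambda>x::'a. \<Prod>b\<in>Basis. f b (x \<bullet> b))"
    apply (subst lborel_eq)
    apply (subst integrable_distr_eq[OF Tm gm])
    unfolding comp by (rule pi)
  show "(\<integral>x. (\<Prod>b\<in>Basis. f b (x \<bullet> b)) \<partial>(lborel::'a measure)) = (\<Prod>b\<in>Basis. integral\<^sup>L lborel (f b))"
    apply (subst lborel_eq)
    apply (subst integral_distr[OF Tm gm])
    unfolding comp
    by (rule lborel_prod.product_integral_prod) (auto intro: int)
qed

definition gam :: "real \<Rightarrow> nat \<Rightarrow> real \<Rightarrow> real" where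
  "gam a d r = sqrt (pi / a) ^ d * exp (- (r^2) / (4 * a))"

lemma gaussD:
  fixes \<zeta> :: "'a::euclidean_space" assumes a: "a > 0"
  shows "has_bochner_integral lborel (\<lambda>u::'a. complex_of_real (exp (- a * norm u ^ 2)) * iexp (\<zeta> \<bullet> u))
     (complex_of_real (gam a DIM('a) (norm \<zeta>)))"
proof -
  define f where "f = (\<lambda>b s. complex_of_real (exp (- a * s^2)) * iexp ((\<zeta> \<bullet> b) * s))"
  have fi: "integrable lborel (f b)" for b
    using gauss1[OF a, of "\<zeta> \<bullet> b"] unfolding f_def by (simp add: has_bochner_integral_iff)
  have fI: "integral\<^sup>L lborel (f b) = complex_of_real (sqrt (pi / a) * exp (- ((\<zeta> \<bullet> b)^2) / (4 * a)))" for b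
    using gauss1[OF a, of "\<zeta> \<bullet> b"] unfolding f_def by (simp add: has_bochner_integral_iff)
  have eqf: "complex_of_real (exp (- a * norm u ^ 2)) * iexp (\<zeta> \<bullet> u) = (\<Prod>b\<in>Basis. f b (u \<bullet> b))" for u :: 'a
  proof -
    have n: "norm u ^ 2 = (\<Sum>b\<in>Basis. (u \<bullet> b)^2)"
      unfolding power2_norm_eq_inner by (subst euclidean_inner) (simp add: power2_eq_square)
    have i: "\<zeta> \<bullet> u = (\<Sum>b\<in>Basis. (\<zeta> \<bullet> b) * (u \<bullet> b))"
      by (simp add: euclidean_inner[of \<zeta> u])
    have "exp (- a * norm u ^ 2) = (\<Prod>b\<in>Basis. exp (- a * (u \<bullet> b)^2))"
      unfolding n by (simp add: exp_sum[symmetric] sum_negf sum_distrib_left)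
    moreover have "iexp (\<zeta> \<bullet> u) = (\<Prod>b\<in>Basis. iexp ((\<zeta> \<bullet> b) * (u \<bullet> b)))"
      unfolding i by (simp add: sum_distrib_left exp_sum[symmetric])
    ultimately show ?thesis unfolding f_def by (simp add: prod.distrib)
  qed
  have P: "(\<Prod>b\<in>(Basis::'a set). complex_of_real (sqrt (pi / a) * exp (- ((\<zeta> \<bullet> b)^2) / (4 * a))))
        = complex_of_real (gam a DIM('a) (norm \<zeta>))"
  proof -
    have n: "norm \<zeta> ^ 2 = (\<Sum>b\<in>(Basis::'a set). (\<zeta> \<bullet> b)^2)"
      unfolding power2_norm_eq_inner by (subst euclidean_inner) (simp add: power2_eq_square)
    have "(\<Prod>b\<in>(Basis::'a set). exp (- ((\<zeta> \<bullet> b)^2) / (4 * a))) = exp (- (norm \<zeta> ^ 2) / (4 * a))"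
      unfolding n by (simp add: exp_sum[symmetric] sum_divide_distrib sum_negf)
    then show ?thesis unfolding gam_def
      by (simp add: prod.distrib flip: of_real_prod)
  qed
  have Q: "(\<Prod>b\<in>(Basis::'a set). integral\<^sup>L lborel (f b)) = complex_of_real (gam a DIM('a) (norm \<zeta>))"
    unfolding P[symmetric] by (rule prod.cong) (simp_all only: fI)
  show ?thesis
    unfolding eqf has_bochner_integral_iff
    using lborel_prod_bochner[of f, OF fi] Q by simp
qed

lemma gaussDcos:
  fixes \<zeta> :: "'a::euclidean_space" assumes a: "a > 0"
  shows "has_bochner_integral lborel (\<lambda>u::'a. exp (- a * norm u ^ 2) * cos (c + \<zeta> \<bullet> u))
     (cos c * gam a DIM('a) (norm \<zeta>))"
proof -
  have "has_bochner_integral lborel (\<lambda>u::'a. iexp c * (complex_of_real (exp (- a * norm u ^ 2)) * iexp (\<zeta> \<bullet> u)))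
     (iexp c * complex_of_real (gam a DIM('a) (norm \<zeta>)))"
    by (rule has_bochner_integral_mult_right) (rule gaussD[OF a])
  from has_bochner_integral_Re[OF this] show ?thesis
    by (simp add: Re_exp Im_exp cos_add algebra_simps)
qed

lemma gauss_int:
  assumes a: "a > 0"
  shows "has_bochner_integral lborel (\<lambda>u::'a::euclidean_space. exp (- a * norm u ^ 2)) (sqrt (pi / a) ^ DIM('a))"
  using gaussDcos[OF a, of 0 0] by (simp add: gam_def)

lemma gam_nonneg: "a > 0 \<Longrightarrow> gam a d r \<ge> 0"
  by (simp add: gam_def)

lemma exp_pow_bound: fixes x :: real assumes "x \<ge> 0" shows "x^k / fact k \<le> exp x"
proof -
  have s: "(\<lambda>n. x^n / fact n) sums exp x"
    using exp_converges[of x] by (simp add: divide_inverse mult.commute scaleR_conv_of_real)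
  have "x^k / fact k = (\<Sum>n\<in>{k}. x^n / fact n)" by simp
  also have "\<dots> \<le> suminf (\<lambda>n. x^n / fact n)"
    by (rule sum_le_suminf) (use s assms in \<open>auto simp: sums_iff\<close>)
  finally show ?thesis using s by (simp add: sums_iff)
qed

lemma integrable_inv_sq: "integrable lborel (\<lambda>x::real. inverse (1 + x^2))"
  using integrable_inverse_1_plus_square by (simp add: set_integrable_def)

lemma int1D:
  fixes c \<alpha> :: real assumes c: "c > 0" and al: "\<alpha> > 0"
  shows "integrable lborel (\<lambda>s::real. exp (- c * \<bar>s\<bar> powr \<alpha>))"
proof -
  obtain k :: nat where k: "2 \<le> real k * \<alpha>"
  proof -
    obtain k :: nat where "2 / \<alpha> \<le> real k" using real_arch_simple by blast
    then show ?thesis using al that by (auto simp: field_simps)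
  qed
  define M where "M = 2 * max 1 (fact k / c^k)"
  have bound: "exp (- c * \<bar>s\<bar> powr \<alpha>) \<le> M * inverse (1 + s^2)" for s :: real
  proof (cases "\<bar>s\<bar> \<le> 1")
    case True
    have "exp (- c * \<bar>s\<bar> powr \<alpha>) \<le> 1" using c by simp
    also have "1 \<le> 2 * inverse (1 + s^2)"
    proof -
      have "s^2 \<le> 1" using True by (simp add: abs_square_le_1)
      then have "inverse 2 \<le> inverse (1 + s^2)"
        by (intro le_imp_inverse_le) (auto simp: add_pos_nonneg)
      then show ?thesis by simp
    qed
    also have "2 * inverse (1 + s^2) \<le> M * inverse (1 + s^2)"
      unfolding M_def by (intro mult_right_mono) (auto simp: add_pos_nonneg)
    finally show ?thesis .
  next
    case False
    have sp: "\<bar>s\<bar> > 1" using False by simp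
    have "\<bar>s\<bar> powr 2 \<le> \<bar>s\<bar> powr (real k * \<alpha>)"
      using sp k by (intro powr_mono) auto
    also have "\<dots> = (\<bar>s\<bar> powr \<alpha>)^k" using sp by (simp add: powr_realpow[symmetric] powr_powr mult.commute)
    finally have s2: "s^2 \<le> (\<bar>s\<bar> powr \<alpha>)^k" using sp by (simp add: powr_realpow)
    have e: "(c * \<bar>s\<bar> powr \<alpha>)^k / fact k \<le> exp (c * \<bar>s\<bar> powr \<alpha>)"
      by (rule exp_pow_bound) (use c in simp)
    have "c^k * s^2 \<le> (c * \<bar>s\<bar> powr \<alpha>)^k"
      unfolding power_mult_distrib by (rule mult_left_mono[OF s2]) (use c in simp)
    then have "c^k * s^2 / fact k \<le> (c * \<bar>s\<bar> powr \<alpha>)^k / fact k"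
      by (rule divide_right_mono) simp
    with e have "c^k * s^2 / fact k \<le> exp (c * \<bar>s\<bar> powr \<alpha>)" by linarith
    then have "exp (- c * \<bar>s\<bar> powr \<alpha>) \<le> fact k / (c^k * s^2)"
      using c sp by (simp add: exp_minus field_simps)
    also have "\<dots> \<le> (fact k / c^k) * (2 * inverse (1 + s^2))"
    proof -
      have "1 < \<bar>s\<bar>^2" by (rule one_less_power) (use sp in auto)
      then have "s^2 > 1" by simp
      then have h: "inverse (2 * s^2) \<le> inverse (1 + s^2)"
        by (intro le_imp_inverse_le) auto
      have "inverse (s^2) = 2 * inverse (2 * s^2)" by simp
      with h have "inverse (s^2) \<le> 2 * inverse (1 + s^2)" by linarith
      then show ?thesis using c
        by (simp add: divide_inverse mult_left_mono)
    qed
    also have "\<dots> \<le> max 1 (fact k / c^k) * (2 * inverse (1 + s^2))"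
      by (rule mult_right_mono) (simp_all add: add_nonneg_nonneg)
    also have "\<dots> = M * inverse (1 + s^2)" by (simp add: M_def)
    finally show ?thesis .
  qed
  show ?thesis
    apply (rule Bochner_Integration.integrable_bound[where f="\<lambda>x. M * inverse (1 + x^2)"])
    using integrable_inv_sq apply simp
     apply measurable
    using bound by (auto intro!: AE_I2 order.trans[OF _ abs_ge_self])
qed

lemma lborel_prod_real_integrable:
  fixes g :: "real \<Rightarrow> real"
  assumes int: "integrable lborel g"
  shows "integrable lborel (\<lambda>x::'a::euclidean_space. \<Prod>b\<in>Basis. g (x \<bullet> b))"
proof -
  have "integrable lborel (\<lambda>x::'a. \<Prod>b\<in>Basis. (\<lambda>b s. complex_of_real (g s)) b (x \<bullet> b))"
    by (rule lborel_prod_bochner) (use int in auto)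
  from integrable_Re[OF this] show ?thesis by (simp flip: of_real_prod)
qed

lemma intphi:
  fixes t \<alpha> :: real assumes t: "t > 0" and al: "\<alpha> > 0"
  shows "integrable lborel (\<lambda>\<xi>::'a::euclidean_space. exp (- t * norm \<xi> powr \<alpha>))"
proof -
  define c where "c = t / real DIM('a)"
  have c: "c > 0" using t by (simp add: c_def)
  have bd: "exp (- t * norm \<xi> powr \<alpha>) \<le> (\<Prod>b\<in>Basis. exp (- c * \<bar>\<xi> \<bullet> b\<bar> powr \<alpha>))" for \<xi> :: 'a
  proof -
    have "(\<Sum>b\<in>(Basis::'a set). \<bar>\<xi> \<bullet> b\<bar> powr \<alpha>) \<le> (\<Sum>b\<in>(Basis::'a set). norm \<xi> powr \<alpha>)"
      by (intro sum_mono powr_mono2) (use al Basis_le_norm in auto)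
    then have "c * (\<Sum>b\<in>(Basis::'a set). \<bar>\<xi> \<bullet> b\<bar> powr \<alpha>) \<le> c * (\<Sum>b\<in>(Basis::'a set). norm \<xi> powr \<alpha>)"
      by (rule mult_left_mono) (use c in simp)
    moreover have "c * (\<Sum>b\<in>(Basis::'a set). norm \<xi> powr \<alpha>) = t * norm \<xi> powr \<alpha>"
      by (simp add: c_def)
    ultimately have "c * (\<Sum>b\<in>(Basis::'a set). \<bar>\<xi> \<bullet> b\<bar> powr \<alpha>) \<le> t * norm \<xi> powr \<alpha>"
      by linarith
    then have "(\<Sum>b\<in>(Basis::'a set). c * \<bar>\<xi> \<bullet> b\<bar> powr \<alpha>) \<le> t * norm \<xi> powr \<alpha>"
      by (simp only: sum_distrib_left)
    then show ?thesis
      by (simp add: exp_sum[symmetric] sum_negf)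
  qed
  show ?thesis
    apply (rule Bochner_Integration.integrable_bound[OF lborel_prod_real_integrable[OF int1D[OF c al]]])
     apply measurable
    using bd by (auto intro!: AE_I2 order.trans[OF _ abs_ge_self])
qed

definition Kg :: "(real \<Rightarrow> real) \<Rightarrow> real \<Rightarrow> 'a::euclidean_space \<Rightarrow> real" where
  "Kg g \<epsilon> w = (\<integral>\<xi>. g (norm \<xi> ^ 2) * exp (- \<epsilon> * norm \<xi> ^ 2) * cos (\<xi> \<bullet> w) \<partial>lborel)"

definition cmf :: "(real \<times> real) list \<Rightarrow> real \<Rightarrow> real" where
  "cmf L l = sum_list (map (\<lambda>(c, s). c * exp (- s * l)) L)"

lemma cmf_Nil[simp]: "cmf [] l = 0" and cmf_Cons[simp]: "cmf ((c, s) # L) l = c * exp (- s * l) + cmf L l"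
  by (simp_all add: cmf_def)

definition cmok :: "(real \<times> real) list \<Rightarrow> bool" where
  "cmok L \<longleftrightarrow> (\<forall>p\<in>set L. fst p \<ge> 0 \<and> snd p \<ge> 0)"

lemma cmf_append: "cmf (L1 @ L2) l = cmf L1 l + cmf L2 l"
  by (simp add: cmf_def)

lemma cmf_shift: "cmf (map (\<lambda>(c', s'). (c * c', s + s')) L) l = c * exp (- s * l) * cmf L l"
  by (induction L) (auto simp: algebra_simps exp_add[symmetric] split_beta)

definition lmul :: "(real \<times> real) list \<Rightarrow> (real \<times> real) list \<Rightarrow> (real \<times> real) list" where
  "lmul L L' = concat (map (\<lambda>(c, s). map (\<lambda>(c', s'). (c * c', s + s')) L') L)"

lemma cmf_lmul: "cmf (lmul L L') l = cmf L l * cmf L' l"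
proof (induction L)
  case Nil then show ?case by (simp add: lmul_def)
next
  case (Cons a L)
  obtain c s where a: "a = (c, s)" by (cases a)
  have e: "lmul ((c, s) # L) L' = map (\<lambda>(c', s'). (c * c', s + s')) L' @ lmul L L'"
    by (simp add: lmul_def)
  show ?case unfolding a e cmf_append cmf_shift Cons.IH by (simp add: algebra_simps)
qed

lemma cmok_append: "cmok (L1 @ L2) \<longleftrightarrow> cmok L1 \<and> cmok L2"
  by (auto simp: cmok_def)

lemma cmok_lmul: "cmok L \<Longrightarrow> cmok L' \<Longrightarrow> cmok (lmul L L')"
  by (auto simp: cmok_def lmul_def split_beta)

lemma cmf_measurable[measurable]: "(\<lambda>x. cmf L (f x)) \<in> borel_measurable M" if [measurable]: "f \<in> borel_measurable M"
  by (induction L) (auto simp: split_beta)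

lemma Kg_cmf_both:
  assumes e: "\<epsilon> > 0"
  shows "cmok L \<Longrightarrow> integrable lborel (\<lambda>\<xi>::'a::euclidean_space. cmf L (norm \<xi> ^ 2) * exp (- \<epsilon> * norm \<xi> ^ 2) * cos (\<xi> \<bullet> w))
     \<and> 0 \<le> Kg (cmf L) \<epsilon> w"
proof (induction L)
  case Nil
  then show ?case by (simp add: Kg_def)
next
  case (Cons a L)
  obtain c s where a: "a = (c, s)" by (cases a)
  have cs: "c \<ge> 0" "s \<ge> 0" and okL: "cmok L" using Cons.prems a by (auto simp: cmok_def)
  note IH = Cons.IH[OF okL]
  have sp: "s + \<epsilon> > 0" using cs e by simp
  have g: "has_bochner_integral lborel (\<lambda>\<xi>::'a. exp (- (s + \<epsilon>) * norm \<xi> ^ 2) * cos (0 + w \<bullet> \<xi>))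
     (cos 0 * gam (s + \<epsilon>) DIM('a) (norm w))"
    by (rule gaussDcos[OF sp])
  have eq: "(\<lambda>\<xi>::'a. cmf ((c, s) # L) (norm \<xi> ^ 2) * exp (- \<epsilon> * norm \<xi> ^ 2) * cos (\<xi> \<bullet> w))
    = (\<lambda>\<xi>. c * (exp (- (s + \<epsilon>) * norm \<xi> ^ 2) * cos (0 + w \<bullet> \<xi>))
          + cmf L (norm \<xi> ^ 2) * exp (- \<epsilon> * norm \<xi> ^ 2) * cos (\<xi> \<bullet> w))"
    by (rule ext) (simp add: algebra_simps exp_add[symmetric] inner_commute)
  have i1: "integrable lborel (\<lambda>\<xi>::'a. c * (exp (- (s + \<epsilon>) * norm \<xi> ^ 2) * cos (0 + w \<bullet> \<xi>)))"
    using g by (auto simp: has_bochner_integral_iff)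
  have i2: "integrable lborel (\<lambda>\<xi>::'a. cmf L (norm \<xi> ^ 2) * exp (- \<epsilon> * norm \<xi> ^ 2) * cos (\<xi> \<bullet> w))"
    using IH by blast
  have A: "integrable lborel (\<lambda>\<xi>::'a. cmf (a # L) (norm \<xi> ^ 2) * exp (- \<epsilon> * norm \<xi> ^ 2) * cos (\<xi> \<bullet> w))"
    unfolding a eq using i1 i2 by simp
  have "Kg (cmf (a # L)) \<epsilon> w = c * (cos 0 * gam (s + \<epsilon>) DIM('a) (norm w)) + Kg (cmf L) \<epsilon> w"
    unfolding Kg_def a eq
    apply (subst Bochner_Integration.integral_add[OF i1 i2])
    using g by (simp add: has_bochner_integral_iff)
  moreover have "gam (s + \<epsilon>) DIM('a) (norm w) \<ge> 0" by (rule gam_nonneg) (use cs e in simp)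
  ultimately have B: "0 \<le> Kg (cmf (a # L)) \<epsilon> w" using IH cs by simp
  show ?case using A B by blast
qed

lemma Kg_cmf_nonneg: "\<epsilon> > 0 \<Longrightarrow> cmok L \<Longrightarrow> 0 \<le> Kg (cmf L) \<epsilon> (w::'a::euclidean_space)"
  using Kg_cmf_both by blast

lemma PD_limit:
  fixes g :: "real \<Rightarrow> real" and G :: "nat \<Rightarrow> real \<Rightarrow> real"
  assumes PD: "\<And>n \<epsilon> (w::'a::euclidean_space). \<epsilon> > 0 \<Longrightarrow> 0 \<le> Kg (G n) \<epsilon> w"
    and lim: "\<And>l. l > 0 \<Longrightarrow> (\<lambda>n. G n l) \<longlonglongrightarrow> g l"
    and bd: "\<And>n l. l > 0 \<Longrightarrow> \<bar>G n l\<bar> \<le> 1"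
    and mG: "\<And>n. (\<lambda>\<xi>::'a. G n (norm \<xi> ^ 2)) \<in> borel_measurable borel"
    and mg: "(\<lambda>\<xi>::'a. g (norm \<xi> ^ 2)) \<in> borel_measurable borel"
    and e: "\<epsilon> > 0"
  shows "0 \<le> Kg g \<epsilon> (w::'a)"
proof -
  have ae: "AE \<xi> in lborel. \<xi> \<noteq> (0::'a)" by (rule AE_lborel_singleton)
  have "(\<lambda>n. Kg (G n) \<epsilon> w) \<longlonglongrightarrow> Kg g \<epsilon> w"
    unfolding Kg_def
  proof (rule integral_dominated_convergence[where w="\<lambda>\<xi>. exp (- \<epsilon> * norm \<xi> ^ 2)"])
    show "(\<lambda>\<xi>::'a. g (norm \<xi> ^ 2) * exp (- \<epsilon> * norm \<xi> ^ 2) * cos (\<xi> \<bullet> w)) \<in> borel_measurable lborel"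
      using mg by measurable
    show "(\<lambda>\<xi>::'a. G n (norm \<xi> ^ 2) * exp (- \<epsilon> * norm \<xi> ^ 2) * cos (\<xi> \<bullet> w)) \<in> borel_measurable lborel" for n
      using mG[of n] by measurable
    show "integrable lborel (\<lambda>\<xi>::'a. exp (- \<epsilon> * norm \<xi> ^ 2))"
      using integrable.intros[OF gauss_int[OF e, where 'a='a]] .
    show "AE \<xi> in lborel. (\<lambda>n. G n (norm \<xi> ^ 2) * exp (- \<epsilon> * norm \<xi> ^ 2) * cos (\<xi> \<bullet> w)) \<longlonglongrightarrow>
        g (norm \<xi> ^ 2) * exp (- \<epsilon> * norm \<xi> ^ 2) * cos (\<xi> \<bullet> w)"
      using ae by eventually_elim (intro tendsto_intros lim, simp)
    show "AE \<xi> in lborel. norm (G n (norm \<xi> ^ 2) * exp (- \<epsilon> * norm \<xi> ^ 2) * cos (\<xi> \<bullet> w)) \<le> exp (- \<epsilon> * norm \<xi> ^ 2)" for n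
      using ae
    proof eventually_elim
      case (elim \<xi>)
      have "\<bar>G n (norm \<xi> ^ 2)\<bar> \<le> 1" using elim by (intro bd) simp
      moreover have "\<bar>cos (\<xi> \<bullet> w)\<bar> \<le> 1" by simp
      ultimately show ?case
        by (simp add: abs_mult mult_le_one mult_le_cancel_right1 mult.commute mult.left_commute)
    qed
  qed
  then show ?thesis
    by (rule LIMSEQ_le_const) (use PD e in auto)
qed

lemma lim_aux: fixes l :: real assumes "l > 0"
  shows "(\<lambda>n::nat. (1 - exp (- (1 / real (Suc n)) * l)) / (1 / real (Suc n))) \<longlonglongrightarrow> l"
  using assms by real_asymp

definition bc :: "real \<Rightarrow> nat \<Rightarrow> real" where
  "bc \<beta> k = - (\<beta> gchoose k) * (-1)^k"

lemma bc_nonneg: assumes "0 < \<beta>" "\<beta> < 1" shows "bc \<beta> (Suc k) \<ge> 0"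
proof -
  have P: "(\<Prod>i<Suc k. (real i - \<beta>)) \<le> 0"
  proof (induction k)
    case 0 then show ?case using assms by simp
  next
    case (Suc k)
    have "(\<Prod>i<Suc (Suc k). (real i - \<beta>)) = (\<Prod>i<Suc k. (real i - \<beta>)) * (real (Suc k) - \<beta>)"
      by simp
    moreover have "real (Suc k) - \<beta> \<ge> 0" using assms by simp
    ultimately show ?case using Suc by (simp add: mult_nonpos_nonneg)
  qed
  have "(\<beta> gchoose (Suc k)) * (-1)^(Suc k) = (\<Prod>i<Suc k. (real i - \<beta>)) / fact (Suc k)"
  proof -
    have "(\<beta> gchoose (Suc k)) = (\<Prod>i<Suc k. (\<beta> - real i)) / fact (Suc k)"
      by (simp add: gbinomial_prod_rev atLeast0LessThan)
    moreover have "(\<Prod>i<Suc k. (\<beta> - real i)) * (-1)^(Suc k) = (\<Prod>i<Suc k. (real i - \<beta>))"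
    proof -
      have "(\<Prod>i<Suc k. (\<beta> - real i) * (-1)) = (\<Prod>i<Suc k. (\<beta> - real i)) * (-1)^(Suc k)"
        by (simp only: prod.distrib prod_constant card_lessThan)
      moreover have "(\<Prod>i<Suc k. (\<beta> - real i) * (-1)) = (\<Prod>i<Suc k. real i - \<beta>)"
        by (intro prod.cong) auto
      ultimately show ?thesis by simp
    qed
    ultimately show ?thesis by (simp add: field_simps)
  qed
  then show ?thesis unfolding bc_def using P by (simp add: divide_nonpos_nonneg)
qed

lemma bc_sums: assumes "0 \<le> q" "q < 1"
  shows "(\<lambda>k. bc \<beta> (Suc k) * q^(Suc k)) sums (1 - (1 - q) powr \<beta>)"
proof -
  have "\<bar>-q\<bar> < 1" using assms by simp
  from gen_binomial_real[OF this, of \<beta>]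
  have "(\<lambda>n. (\<beta> gchoose n) * (-q)^n) sums (1 - q) powr \<beta>" by simp
  then have "(\<lambda>n. (\<beta> gchoose (Suc n)) * (-q)^(Suc n)) sums ((1 - q) powr \<beta> - 1)"
    by (subst sums_Suc_iff) simp
  from sums_minus[OF this] show ?thesis
    unfolding bc_def by (simp add: power_minus' algebra_simps)
qed

definition gN :: "real \<Rightarrow> real \<Rightarrow> real \<Rightarrow> nat \<Rightarrow> real \<Rightarrow> real" where
  "gN t \<beta> h N l = exp (- (t * h powr (- \<beta>)) * (1 - (\<Sum>k<N. bc \<beta> (Suc k) * exp (- h * l) ^ (Suc k))))"

definition gH :: "real \<Rightarrow> real \<Rightarrow> real \<Rightarrow> real \<Rightarrow> real" where
  "gH t \<beta> h l = exp (- (t * h powr (- \<beta>)) * (1 - exp (- h * l)) powr \<beta>)"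

definition gL :: "real \<Rightarrow> real \<Rightarrow> real \<Rightarrow> real" where
  "gL t \<beta> l = exp (- t * l powr \<beta>)"

lemma partial_bc:
  assumes b: "0 < \<beta>" "\<beta> < 1" and q: "0 \<le> q" "q < 1"
  shows "(\<Sum>k<N. bc \<beta> (Suc k) * q ^ (Suc k)) \<le> 1 - (1 - q) powr \<beta>"
    and "0 \<le> (\<Sum>k<N. bc \<beta> (Suc k) * q ^ (Suc k))"
proof -
  have s: "(\<lambda>k. bc \<beta> (Suc k) * q^(Suc k)) sums (1 - (1 - q) powr \<beta>)" by (rule bc_sums[OF q])
  have nn: "0 \<le> bc \<beta> (Suc k) * q^(Suc k)" for k using bc_nonneg[OF b] q by simp
  show "(\<Sum>k<N. bc \<beta> (Suc k) * q ^ (Suc k)) \<le> 1 - (1 - q) powr \<beta>"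
    using sum_le_suminf[of "\<lambda>k. bc \<beta> (Suc k) * q^(Suc k)" "{..<N}"] s nn
    by (auto simp: sums_iff)
  show "0 \<le> (\<Sum>k<N. bc \<beta> (Suc k) * q ^ (Suc k))" using nn by (intro sum_nonneg) auto
qed

lemma cmf_map_upt: "cmf (map (\<lambda>k. (a k, s k)) [0..<N]) l = (\<Sum>k<N. a k * exp (- s k * l))"
  by (induction N) (simp_all add: cmf_append)

lemma cmf_concat_upt: "cmf (concat (map F [0..<N])) l = (\<Sum>j<N. cmf (F j) l)"
  by (induction N) (simp_all add: cmf_append)

fun lpow :: "(real \<times> real) list \<Rightarrow> nat \<Rightarrow> (real \<times> real) list" where
  "lpow L 0 = [(1, 0)]"
| "lpow L (Suc j) = lmul L (lpow L j)"

lemma cmf_lpow: "cmf (lpow L j) l = cmf L l ^ j"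
  by (induction j) (simp_all add: cmf_lmul)

lemma cmok_lpow: "cmok L \<Longrightarrow> cmok (lpow L j)"
proof (induction j)
  case 0 then show ?case by (simp add: cmok_def)
next
  case (Suc j) then show ?case by (simp add: cmok_lmul)
qed

lemma PD_gN:
  assumes t: "t > 0" and b: "0 < \<beta>" "\<beta> < 1" and h: "h > 0" and e: "\<epsilon> > 0"
  shows "0 \<le> Kg (gN t \<beta> h N) \<epsilon> (w::'a::euclidean_space)"
proof -
  define T where "T = t * h powr (- \<beta>)"
  have T: "T > 0" using t h by (simp add: T_def)
  define Lu where "Lu = map (\<lambda>k. (T * bc \<beta> (Suc k), h * real (Suc k))) [0..<N]"
  define u where "u = (\<lambda>l. T * (\<Sum>k<N. bc \<beta> (Suc k) * exp (- h * l) ^ (Suc k)))"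
  have cmfLu: "cmf Lu l = u l" for l
  proof -
    have "exp (- h * l) ^ (Suc k) = exp (- (h * real (Suc k)) * l)" for k
    proof -
      have "exp (- h * l) ^ (Suc k) = exp (real (Suc k) * (- h * l))" by (rule exp_of_nat_mult[symmetric])
      also have "real (Suc k) * (- h * l) = - (h * real (Suc k)) * l" by (simp only: algebra_simps)
      finally show ?thesis .
    qed
    then show ?thesis unfolding Lu_def u_def cmf_map_upt
      by (simp add: sum_distrib_left mult.assoc)
  qed
  have okLu: "cmok Lu" unfolding Lu_def cmok_def using T h bc_nonneg[OF b] by auto
  define PE where "PE = (\<lambda>K. concat (map (\<lambda>j. map (\<lambda>(c', s'). (exp (- T) / fact j * c', 0 + s')) (lpow Lu j)) [0..<Suc K]))"
  have cmfPE: "cmf (PE K) l = (\<Sum>j<Suc K. exp (- T) / fact j * u l ^ j)" for K l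
    unfolding PE_def cmf_concat_upt cmf_shift cmf_lpow cmfLu by simp
  have okPE: "cmok (PE K)" for K
  proof -
    have H: "0 \<le> c \<and> 0 \<le> s'" if "(c, s') \<in> set (lpow Lu j)" for c s' j
      using cmok_lpow[OF okLu, of j] that unfolding cmok_def by force
    show ?thesis unfolding PE_def cmok_def using T by (auto simp: split_beta dest!: H)
  qed
  have gNu: "gN t \<beta> h N l = exp (- T) * exp (u l)" for l
    unfolding gN_def u_def T_def by (simp add: exp_add[symmetric] algebra_simps)
  have ser: "(\<lambda>j. exp (- T) / fact j * u l ^ j) sums (exp (- T) * exp (u l))" for l
  proof -
    have "(\<lambda>j. u l ^ j / fact j) sums exp (u l)"
      using exp_converges[of "u l"] by (simp add: divide_inverse mult.commute scaleR_conv_of_real)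
    from sums_mult[OF this, of "exp (- T)"] show ?thesis by (simp add: field_simps)
  qed
  have upos: "0 \<le> u l" if "l > 0" for l
    unfolding u_def using partial_bc(2)[OF b, of "exp (- h * l)" N] T h that by simp
  have ule: "u l \<le> T" if "l > 0" for l
  proof -
    have q: "0 \<le> exp (- h * l)" "exp (- h * l) < 1" using h that by auto
    have "(\<Sum>k<N. bc \<beta> (Suc k) * exp (- h * l) ^ (Suc k)) \<le> 1"
      using partial_bc(1)[OF b q, of N] powr_ge_zero[of "1 - exp (- h * l)" \<beta>] by linarith
    then show ?thesis unfolding u_def using T by (simp add: mult_left_le)
  qed
  show ?thesis
  proof (rule PD_limit[where G="\<lambda>K. cmf (PE K)"])
    show "0 \<le> Kg (cmf (PE K)) \<epsilon>' w'" if "\<epsilon>' > 0" for K \<epsilon>' and w' :: 'a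
      by (rule Kg_cmf_nonneg[OF that okPE])
    show "(\<lambda>K. cmf (PE K) l) \<longlonglongrightarrow> gN t \<beta> h N l" if "l > 0" for l
      unfolding cmfPE gNu using ser[of l, unfolded sums_def] by (rule LIMSEQ_Suc)
    show "\<bar>cmf (PE K) l\<bar> \<le> 1" if "l > 0" for K l
    proof -
      have nn: "0 \<le> exp (- T) / fact j * u l ^ j" for j using upos[OF that] by simp
      have sm: "summable (\<lambda>j. exp (- T) / fact j * u l ^ j)"
        and sv: "suminf (\<lambda>j. exp (- T) / fact j * u l ^ j) = exp (- T) * exp (u l)"
        using ser[of l] by (auto simp: sums_iff)
      have "(\<Sum>j<Suc K. exp (- T) / fact j * u l ^ j) \<le> suminf (\<lambda>j. exp (- T) / fact j * u l ^ j)"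
        by (rule sum_le_suminf[OF sm]) (use nn in auto)
      then have "cmf (PE K) l \<le> exp (- T) * exp (u l)"
        unfolding cmfPE sv .
      also have "\<dots> \<le> 1" using ule[OF that] by (simp add: exp_add[symmetric])
      finally show ?thesis unfolding cmfPE using nn by (simp add: sum_nonneg)
    qed
    show "(\<lambda>\<xi>::'a. cmf (PE K) (norm \<xi> ^ 2)) \<in> borel_measurable borel" for K
      by measurable
    show "(\<lambda>\<xi>::'a. gN t \<beta> h N (norm \<xi> ^ 2)) \<in> borel_measurable borel"
      unfolding gN_def by measurable
  qed (rule e)
qed

lemma gN_bound:
  assumes t: "t > 0" and b: "0 < \<beta>" "\<beta> < 1" and h: "h > 0" and l: "l > 0"
  shows "\<bar>gN t \<beta> h N l\<bar> \<le> 1"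
proof -
  have q: "0 \<le> exp (- h * l)" "exp (- h * l) < 1" using h l by auto
  have "(\<Sum>k<N. bc \<beta> (Suc k) * exp (- h * l) ^ (Suc k)) \<le> 1"
    using partial_bc(1)[OF b q, of N] powr_ge_zero[of "1 - exp (- h * l)" \<beta>] by linarith
  moreover have "t * h powr (- \<beta>) > 0" using t h by simp
  ultimately show ?thesis unfolding gN_def
    by (simp add: mult_nonneg_nonneg)
qed

lemma PD_gH:
  assumes t: "t > 0" and b: "0 < \<beta>" "\<beta> < 1" and h: "h > 0" and e: "\<epsilon> > 0"
  shows "0 \<le> Kg (gH t \<beta> h) \<epsilon> (w::'a::euclidean_space)"
proof (rule PD_limit[where G="\<lambda>N. gN t \<beta> h N"])
  show "0 \<le> Kg (gN t \<beta> h N) \<epsilon>' w'" if "\<epsilon>' > 0" for N \<epsilon>' and w' :: 'a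
    by (rule PD_gN[OF t b h that])
  show "(\<lambda>N. gN t \<beta> h N l) \<longlonglongrightarrow> gH t \<beta> h l" if l: "l > 0" for l
  proof -
    have q: "0 \<le> exp (- h * l)" "exp (- h * l) < 1" using h l by auto
    have "(\<lambda>N. \<Sum>k<N. bc \<beta> (Suc k) * exp (- h * l) ^ (Suc k)) \<longlonglongrightarrow> 1 - (1 - exp (- h * l)) powr \<beta>"
      using bc_sums[OF q, of \<beta>] by (simp add: sums_def)
    then have "(\<lambda>N. gN t \<beta> h N l) \<longlonglongrightarrow> exp (- (t * h powr (- \<beta>)) * (1 - (1 - (1 - exp (- h * l)) powr \<beta>)))"
      unfolding gN_def by (intro tendsto_intros)
    then show ?thesis unfolding gH_def by simp
  qed
  show "\<bar>gN t \<beta> h N l\<bar> \<le> 1" if "l > 0" for N l by (rule gN_bound[OF t b h that])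
  show "(\<lambda>\<xi>::'a. gN t \<beta> h N (norm \<xi> ^ 2)) \<in> borel_measurable borel" for N
    unfolding gN_def by measurable
  show "(\<lambda>\<xi>::'a. gH t \<beta> h (norm \<xi> ^ 2)) \<in> borel_measurable borel"
    unfolding gH_def by measurable
qed (rule e)

lemma PD_gL:
  assumes t: "t > 0" and b: "0 < \<beta>" "\<beta> < 1" and e: "\<epsilon> > 0"
  shows "0 \<le> Kg (gL t \<beta>) \<epsilon> (w::'a::euclidean_space)"
proof (rule PD_limit[where G="\<lambda>n. gH t \<beta> (1 / real (Suc n))"])
  show "0 \<le> Kg (gH t \<beta> (1 / real (Suc n))) \<epsilon>' w'" if "\<epsilon>' > 0" for n \<epsilon>' and w' :: 'a
    by (rule PD_gH[OF t b _ that]) simp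
  show "(\<lambda>n. gH t \<beta> (1 / real (Suc n)) l) \<longlonglongrightarrow> gL t \<beta> l" if l: "l > 0" for l
  proof -
    have eq: "gH t \<beta> (1 / real (Suc n)) l =
       exp (- t * ((1 - exp (- (1 / real (Suc n)) * l)) / (1 / real (Suc n))) powr \<beta>)" for n
    proof -
      define h where "h = 1 / real (Suc n)"
      have h: "h > 0" by (simp add: h_def)
      have nn: "0 \<le> 1 - exp (- h * l)" using h l by simp
      have "((1 - exp (- h * l)) / h) powr \<beta> = (1 - exp (- h * l)) powr \<beta> / h powr \<beta>"
        using nn h by (auto intro: powr_divide)
      also have "\<dots> = h powr (- \<beta>) * (1 - exp (- h * l)) powr \<beta>"
        by (simp add: powr_minus_divide)
      finally have "h powr (- \<beta>) * (1 - exp (- h * l)) powr \<beta> = ((1 - exp (- h * l)) / h) powr \<beta>" ..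
      then show ?thesis unfolding gH_def h_def[symmetric] by (simp add: mult.assoc)
    qed
    have "(\<lambda>n. exp (- t * ((1 - exp (- (1 / real (Suc n)) * l)) / (1 / real (Suc n))) powr \<beta>)) \<longlonglongrightarrow>
        exp (- t * l powr \<beta>)"
      by (intro tendsto_intros tendsto_powr lim_aux[OF l]) (use l in simp)
    then show ?thesis unfolding eq gL_def .
  qed
  show "\<bar>gH t \<beta> (1 / real (Suc n)) l\<bar> \<le> 1" if "l > 0" for n l
    unfolding gH_def using t by (simp add: mult_nonneg_nonneg)
  show "(\<lambda>\<xi>::'a. gH t \<beta> (1 / real (Suc n)) (norm \<xi> ^ 2)) \<in> borel_measurable borel" for n
    unfolding gH_def by measurable
  show "(\<lambda>\<xi>::'a. gL t \<beta> (norm \<xi> ^ 2)) \<in> borel_measurable borel"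
    unfolding gL_def by measurable
qed (rule e)

lemma norm_sq_powr: "(norm (x::'a::real_normed_vector) ^ 2) powr (\<alpha> / 2) = norm x powr \<alpha>"
proof (cases "x = 0")
  case True then show ?thesis by simp
next
  case False
  then have "norm x > 0" by simp
  then have e: "norm x ^ 2 = norm x powr 2" by (simp add: powr_realpow)
  show ?thesis unfolding e powr_powr by simp
qed

lemma hk_int_nonneg:
  assumes t: "t > 0" and a: "0 < \<alpha>" "\<alpha> < 2"
  shows "0 \<le> (\<integral>\<xi>. exp (- t * (norm \<xi> powr \<alpha>)) * cos (\<xi> \<bullet> (w::'a::euclidean_space)) \<partial>lborel)"
proof -
  define \<beta> where "\<beta> = \<alpha> / 2"
  have b: "0 < \<beta>" "\<beta> < 1" using a by (auto simp: \<beta>_def)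
  have gLeq: "gL t \<beta> (norm \<xi> ^ 2) = exp (- t * (norm \<xi> powr \<alpha>))" for \<xi> :: 'a
    unfolding gL_def \<beta>_def norm_sq_powr ..
  have "(\<lambda>n. Kg (gL t \<beta>) (1 / real (Suc n)) w) \<longlonglongrightarrow> (\<integral>\<xi>. exp (- t * (norm \<xi> powr \<alpha>)) * cos (\<xi> \<bullet> w) \<partial>lborel)"
    unfolding Kg_def gLeq
  proof (rule integral_dominated_convergence[where w="\<lambda>\<xi>. exp (- t * (norm \<xi> powr \<alpha>))"])
    show "integrable lborel (\<lambda>\<xi>::'a. exp (- t * (norm \<xi> powr \<alpha>)))"
      by (rule intphi[OF t a(1)])
    show "AE \<xi> in lborel. (\<lambda>n. exp (- t * norm \<xi> powr \<alpha>) * exp (- (1 / real (Suc n)) * norm \<xi> ^ 2) * cos (\<xi> \<bullet> w))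
      \<longlonglongrightarrow> exp (- t * norm \<xi> powr \<alpha>) * cos (\<xi> \<bullet> w)"
    proof (rule AE_I2)
      fix \<xi> :: 'a
      have z: "(\<lambda>n. 1 / real (Suc n)) \<longlonglongrightarrow> 0"
        by (rule LIMSEQ_Suc[OF lim_const_over_n])
      have "(\<lambda>n. exp (- (1 / real (Suc n)) * norm \<xi> ^ 2)) \<longlonglongrightarrow> exp (- 0 * norm \<xi> ^ 2)"
        by (rule tendsto_exp[OF tendsto_mult[OF tendsto_minus[OF z] tendsto_const]])
      from tendsto_mult[OF tendsto_mult[OF tendsto_const this] tendsto_const, of "exp (- t * norm \<xi> powr \<alpha>)" "cos (\<xi> \<bullet> w)"]
      show "(\<lambda>n. exp (- t * norm \<xi> powr \<alpha>) * exp (- (1 / real (Suc n)) * norm \<xi> ^ 2) * cos (\<xi> \<bullet> w))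
      \<longlonglongrightarrow> exp (- t * norm \<xi> powr \<alpha>) * cos (\<xi> \<bullet> w)"
        by simp
    qed
    show "AE \<xi> in lborel. norm (exp (- t * norm \<xi> powr \<alpha>) * exp (- (1 / real (Suc n)) * norm \<xi> ^ 2) * cos (\<xi> \<bullet> w))
      \<le> exp (- t * norm \<xi> powr \<alpha>)" for n
    proof (rule AE_I2)
      fix \<xi> :: 'a
      have "exp (- (1 / real (Suc n)) * norm \<xi> ^ 2) \<le> 1" by simp
      moreover have "\<bar>cos (\<xi> \<bullet> w)\<bar> \<le> 1" by simp
      ultimately have "exp (- (1 / real (Suc n)) * norm \<xi> ^ 2) * \<bar>cos (\<xi> \<bullet> w)\<bar> \<le> 1"
        by (simp add: mult_le_one)
      then show "norm (exp (- t * norm \<xi> powr \<alpha>) * exp (- (1 / real (Suc n)) * norm \<xi> ^ 2) * cos (\<xi> \<bullet> w))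
        \<le> exp (- t * norm \<xi> powr \<alpha>)"
        by (simp add: abs_mult mult.assoc mult_left_le)
    qed
  qed measurable
  moreover have "0 \<le> Kg (gL t \<beta>) (1 / real (Suc n)) w" for n
    by (rule PD_gL[OF t b]) simp
  ultimately show ?thesis
    by (intro LIMSEQ_le_const) auto
qed

lemma hk_nonneg:
  assumes t: "t > 0" and a: "0 < \<alpha>" "\<alpha> < 2"
  shows "0 \<le> stable_hk \<alpha> t (w::'a::euclidean_space)"
  unfolding stable_hk_def using hk_int_nonneg[OF assms, of w] by simp

lemma integrable_prodfun:
  fixes f :: "'a::euclidean_space \<Rightarrow> real" and g :: "'b::euclidean_space \<Rightarrow> real"
  assumes f: "integrable lborel f" and g: "integrable lborel g"
  shows "integrable (lborel \<Otimes>\<^sub>M lborel) (\<lambda>(x, y). f x * g y)"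
    and "(\<integral>p. (case p of (x, y) \<Rightarrow> f x * g y) \<partial>(lborel \<Otimes>\<^sub>M lborel)) = integral\<^sup>L lborel f * integral\<^sup>L lborel g"
proof -
  have [measurable]: "f \<in> borel_measurable borel" "g \<in> borel_measurable borel" using f g by auto
  show I: "integrable (lborel \<Otimes>\<^sub>M lborel) (\<lambda>(x, y). f x * g y)"
  proof (rule lborel_pair.Fubini_integrable)
    show "(\<lambda>(x, y). f x * g y) \<in> borel_measurable (lborel \<Otimes>\<^sub>M lborel)" by measurable
    have "integrable lborel (\<lambda>x. norm (f x) * (\<integral>y. norm (g y) \<partial>lborel))"
      using f by (intro integrable_mult_left) auto
    moreover have "(\<lambda>x. \<integral>y. norm (case (x, y) of (x, y) \<Rightarrow> f x * g y) \<partial>lborel) = (\<lambda>x. norm (f x) * (\<integral>y. norm (g y) \<partial>lborel))"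
      by (rule ext) (simp add: abs_mult integral_mult_right_zero)
    ultimately show "integrable lborel (\<lambda>x. \<integral>y. norm (case (x, y) of (x, y) \<Rightarrow> f x * g y) \<partial>lborel)"
      by simp
    show "AE x in lborel. integrable lborel (\<lambda>y. case (x, y) of (x, y) \<Rightarrow> f x * g y)"
      using g by auto
  qed
  have "(\<integral>x. (\<integral>y. f x * g y \<partial>lborel) \<partial>lborel) = integral\<^sup>L (lborel \<Otimes>\<^sub>M lborel) (\<lambda>(x, y). f x * g y)"
    by (rule lborel_pair.integral_fst) (use I in simp)
  moreover have "(\<integral>x. (\<integral>y. f x * g y \<partial>lborel) \<partial>lborel) = integral\<^sup>L lborel f * integral\<^sup>L lborel g"
    by simp
  ultimately show "(\<integral>p. (case p of (x, y) \<Rightarrow> f x * g y) \<partial>(lborel \<Otimes>\<^sub>M lborel)) = integral\<^sup>L lborel f * integral\<^sup>L lborel g"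
    by simp
qed

definition phi :: "real \<Rightarrow> real \<Rightarrow> 'a::euclidean_space \<Rightarrow> real" where
  "phi t \<alpha> \<xi> = exp (- t * (norm \<xi> powr \<alpha>))"

lemma phi_pos: "0 < phi t \<alpha> \<xi>" by (simp add: phi_def)
lemma phi_le1: "t \<ge> 0 \<Longrightarrow> phi t \<alpha> \<xi> \<le> 1" by (simp add: phi_def)
lemma phi_meas[measurable]: "phi t \<alpha> \<in> borel_measurable borel" unfolding phi_def by measurable
lemma phi_int: "t > 0 \<Longrightarrow> \<alpha> > 0 \<Longrightarrow> integrable lborel (phi t \<alpha> :: 'a::euclidean_space \<Rightarrow> real)"
  unfolding phi_def using intphi by blast
lemma phi_cont: "\<alpha> > 0 \<Longrightarrow> continuous_on UNIV (phi t \<alpha> :: 'a::euclidean_space \<Rightarrow> real)"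
  unfolding phi_def by (intro continuous_intros continuous_on_powr') auto
lemma phi_minus: "phi t \<alpha> (- \<xi>) = phi t \<alpha> \<xi>" by (simp add: phi_def)
lemma phi_sq: "phi t \<alpha> \<xi> * phi t \<alpha> \<xi> = phi (2 * t) \<alpha> \<xi>"
  by (simp add: phi_def exp_add[symmetric])

lemma hk_phi: "stable_hk \<alpha> t w = (1 / (2 * pi) ^ DIM('a)) * (\<integral>\<xi>. phi t \<alpha> \<xi> * cos (\<xi> \<bullet> w) \<partial>lborel)"
  for w :: "'a::euclidean_space"
  by (simp add: stable_hk_def phi_def)

lemma int_phi_cos: "t > 0 \<Longrightarrow> \<alpha> > 0 \<Longrightarrow> integrable lborel (\<lambda>\<xi>::'a::euclidean_space. phi t \<alpha> \<xi> * cos (\<xi> \<bullet> w))"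
  by (rule Bochner_Integration.integrable_bound[OF phi_int[of t \<alpha>]]) (auto simp: abs_mult phi_pos less_imp_le intro!: mult_left_le)

lemma hk_bound:
  assumes "t > 0" "\<alpha> > 0"
  shows "\<bar>stable_hk \<alpha> t (w::'a::euclidean_space)\<bar> \<le> (1 / (2 * pi) ^ DIM('a)) * (\<integral>\<xi>. phi t \<alpha> (\<xi>::'a) \<partial>lborel)"
proof -
  have "\<bar>\<integral>\<xi>. phi t \<alpha> \<xi> * cos (\<xi> \<bullet> w) \<partial>lborel\<bar> \<le> (\<integral>\<xi>. phi t \<alpha> (\<xi>::'a) \<partial>lborel)"
  proof -
    have "\<bar>\<integral>\<xi>. phi t \<alpha> \<xi> * cos (\<xi> \<bullet> w) \<partial>lborel\<bar> \<le> (\<integral>\<xi>. \<bar>phi t \<alpha> \<xi> * cos (\<xi> \<bullet> w)\<bar> \<partial>lborel)"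
      by (rule integral_abs_bound)
    also have "\<dots> \<le> (\<integral>\<xi>. phi t \<alpha> (\<xi>::'a) \<partial>lborel)"
      apply (rule Bochner_Integration.integral_mono)
      using integrable_abs[OF int_phi_cos[OF assms, of w]] phi_int[OF assms, where 'a='a]
      by (auto simp: abs_mult phi_pos less_imp_le intro!: mult_left_le)
    finally show ?thesis .
  qed
  then show ?thesis unfolding hk_phi by (simp add: abs_mult divide_right_mono)
qed

lemma hk_meas[measurable]: "(\<lambda>w::'a::euclidean_space. stable_hk \<alpha> t w) \<in> borel_measurable borel"
  unfolding hk_phi by measurable

definition Aconv :: "real \<Rightarrow> real \<Rightarrow> real \<Rightarrow> 'a::euclidean_space \<Rightarrow> real" where
  "Aconv t \<alpha> \<delta> \<xi> = (1 / (2 * pi) ^ DIM('a)) * (\<integral>\<eta>. phi t \<alpha> \<eta> * gam \<delta> DIM('a) (norm (\<eta> - \<xi>)) \<partial>lborel)"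

lemma gam_le: "\<delta> > 0 \<Longrightarrow> gam \<delta> d r \<le> sqrt (pi / \<delta>) ^ d"
  by (simp add: gam_def)

lemma gam_meas[measurable]: "gam \<delta> d \<in> borel_measurable borel"
  unfolding gam_def by measurable

lemma int_phi_gam:
  assumes t: "t > 0" and a: "\<alpha> > 0" and d: "\<delta> > 0"
  shows "integrable lborel (\<lambda>\<eta>::'a::euclidean_space. phi t \<alpha> \<eta> * gam \<delta> DIM('a) (norm (\<eta> - \<xi>)))"
proof (rule Bochner_Integration.integrable_bound[where f="\<lambda>\<eta>. sqrt (pi / \<delta>) ^ DIM('a) * phi t \<alpha> \<eta>"])
  show "integrable lborel (\<lambda>\<eta>::'a. sqrt (pi / \<delta>) ^ DIM('a) * phi t \<alpha> \<eta>)"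
    using phi_int[OF t a, where 'a='a] by simp
  show "AE \<eta> in lborel. norm (phi t \<alpha> \<eta> * gam \<delta> DIM('a) (norm (\<eta> - \<xi>))) \<le> norm (sqrt (pi / \<delta>) ^ DIM('a) * phi t \<alpha> \<eta>)"
    using gam_le[OF d] gam_nonneg[OF d] phi_pos d
    by (auto simp: abs_mult less_imp_le mult.commute intro!: mult_left_mono AE_I2)
qed measurable

lemma int_phi2:
  assumes t: "t > 0" and a: "\<alpha> > 0"
  shows "integrable (lborel::('a::euclidean_space \<times> 'a) measure) (\<lambda>p. phi t \<alpha> (fst p) * phi t \<alpha> (snd p))"
proof -
  have "integrable (lborel \<Otimes>\<^sub>M lborel) (\<lambda>(x::'a, y::'a). phi t \<alpha> x * phi t \<alpha> y)"
    by (rule integrable_prodfun(1)[OF phi_int[OF t a] phi_int[OF t a]])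
  moreover have "(\<lambda>p::'a \<times> 'a. phi t \<alpha> (fst p) * phi t \<alpha> (snd p)) = (\<lambda>(x, y). phi t \<alpha> x * phi t \<alpha> y)"
    by auto
  ultimately show ?thesis by (simp only: lborel_prod)
qed

lemma cos_prod_id:
  fixes \<xi> \<eta> u v :: "'a::real_inner"
  shows "cos (\<xi> \<bullet> (v - u)) * cos (\<eta> \<bullet> u) =
    (cos (\<xi> \<bullet> v + (\<eta> - \<xi>) \<bullet> u) + cos (\<xi> \<bullet> v + (- (\<xi> + \<eta>)) \<bullet> u)) / 2"
proof -
  have "cos (\<xi> \<bullet> (v - u)) * cos (\<eta> \<bullet> u) =
      (cos ((\<xi> \<bullet> (v - u)) + \<eta> \<bullet> u) + cos ((\<xi> \<bullet> (v - u)) - \<eta> \<bullet> u)) / 2"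
    by (simp add: cos_add cos_diff)
  also have "(\<xi> \<bullet> (v - u)) + \<eta> \<bullet> u = \<xi> \<bullet> v + (\<eta> - \<xi>) \<bullet> u"
    by (simp add: inner_diff_left inner_diff_right)
  also have "(\<xi> \<bullet> (v - u)) - \<eta> \<bullet> u = \<xi> \<bullet> v + (- (\<xi> + \<eta>)) \<bullet> u"
    by (simp add: inner_diff_right inner_add_left inner_diff_left inner_minus_left)
  finally show ?thesis .
qed

lemma J_formula:
  fixes v :: "'a::euclidean_space"
  assumes t: "t > 0" and a: "\<alpha> > 0" and d: "\<delta> > 0"
  shows "(\<integral>u. stable_hk \<alpha> t (v - u) * stable_hk \<alpha> t u * exp (- \<delta> * norm u ^ 2) \<partial>lborel)
    = (1 / (2 * pi) ^ DIM('a)) * (\<integral>\<xi>. phi t \<alpha> \<xi> * cos (\<xi> \<bullet> v) * ((Aconv t \<alpha> \<delta> \<xi> + Aconv t \<alpha> \<delta> (- \<xi>)) / 2) \<partial>lborel)"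
proof -
  interpret Q: pair_sigma_finite "lborel::'a measure" "lborel \<Otimes>\<^sub>M lborel :: ('a \<times> 'a) measure"
    by (simp add: pair_sigma_finite_def lborel.sigma_finite_measure_axioms lborel_prod)
  define C where "C = 1 / (2 * pi) ^ DIM('a)"
  have C: "C > 0" by (simp add: C_def)
  define F where "F = (\<lambda>u::'a. \<lambda>p::'a \<times> 'a. phi t \<alpha> (fst p) * phi t \<alpha> (snd p) *
      (cos (fst p \<bullet> (v - u)) * cos (snd p \<bullet> u) * exp (- \<delta> * norm u ^ 2)))"
  have Fm[measurable]: "(\<lambda>(u, p). F u p) \<in> borel_measurable (lborel \<Otimes>\<^sub>M (lborel \<Otimes>\<^sub>M lborel))"
    unfolding F_def by measurable
  have intF: "integrable (lborel \<Otimes>\<^sub>M (lborel \<Otimes>\<^sub>M lborel)) (\<lambda>(u, p). F u p)"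
  proof (rule Bochner_Integration.integrable_bound)
    have i2: "integrable (lborel \<Otimes>\<^sub>M lborel) (\<lambda>(x::'a, y::'a). phi t \<alpha> x * phi t \<alpha> y)"
      by (rule integrable_prodfun(1)[OF phi_int[OF t a] phi_int[OF t a]])
    have i1: "integrable lborel (\<lambda>u::'a. exp (- \<delta> * norm u ^ 2))"
      using gauss_int[OF d, where 'a='a] by (simp add: has_bochner_integral_iff)
    show "integrable (lborel \<Otimes>\<^sub>M (lborel \<Otimes>\<^sub>M lborel)) (\<lambda>(u::'a, p::'a \<times> 'a). exp (- \<delta> * norm u ^ 2) * (case p of (x, y) \<Rightarrow> phi t \<alpha> x * phi t \<alpha> y))"
      by (rule Q.Fubini_integrable) (use i1 i2 in \<open>auto simp: integral_mult_right_zero abs_mult intro!: integrable_mult_left\<close>)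
    show "(\<lambda>(u, p). F u p) \<in> borel_measurable (lborel \<Otimes>\<^sub>M (lborel \<Otimes>\<^sub>M lborel))" by measurable
    show "AE x in lborel \<Otimes>\<^sub>M (lborel \<Otimes>\<^sub>M lborel). norm (case x of (u, p) \<Rightarrow> F u p) \<le> norm (case x of (u::'a, p::'a \<times> 'a) \<Rightarrow> exp (- \<delta> * norm u ^ 2) * (case p of (x, y) \<Rightarrow> phi t \<alpha> x * phi t \<alpha> y))"
      by (rule AE_I2) (auto simp: F_def abs_mult phi_pos less_imp_le mult_le_one intro!: mult_left_le)
  qed
  have inner: "(\<integral>p. F u p \<partial>(lborel \<Otimes>\<^sub>M lborel)) = stable_hk \<alpha> t (v - u) * stable_hk \<alpha> t u * exp (- \<delta> * norm u ^ 2) / C^2" for u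
  proof -
    define f where "f = (\<lambda>x::'a. phi t \<alpha> x * cos (x \<bullet> (v - u)))"
    define g where "g = (\<lambda>y::'a. phi t \<alpha> y * cos (y \<bullet> u) * exp (- \<delta> * norm u ^ 2))"
    have fi: "integrable lborel f" unfolding f_def by (rule int_phi_cos[OF t a])
    have gi: "integrable lborel g" unfolding g_def by (intro integrable_mult_left int_phi_cos[OF t a])
    have "F u = (\<lambda>(x, y). f x * g y)" by (auto simp: F_def f_def g_def fun_eq_iff)
    then have "(\<integral>p. F u p \<partial>(lborel \<Otimes>\<^sub>M lborel)) = integral\<^sup>L lborel f * integral\<^sup>L lborel g"
      using integrable_prodfun(2)[OF fi gi] by (simp add: case_prod_beta')
    also have "integral\<^sup>L lborel f = stable_hk \<alpha> t (v - u) / C"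
      unfolding f_def hk_phi C_def[symmetric] using C by simp
    also have "integral\<^sup>L lborel g = exp (- \<delta> * norm u ^ 2) * (stable_hk \<alpha> t u / C)"
      unfolding g_def hk_phi C_def[symmetric] using C by (simp add: integral_mult_left_zero mult.commute)
    finally show ?thesis using C by (simp add: power2_eq_square field_simps)
  qed
  have step1: "(\<integral>u. stable_hk \<alpha> t (v - u) * stable_hk \<alpha> t u * exp (- \<delta> * norm u ^ 2) \<partial>lborel)
      = C^2 * (\<integral>u. (\<integral>p. F u p \<partial>(lborel \<Otimes>\<^sub>M lborel)) \<partial>lborel)"
    unfolding inner using C by simp
  have step2: "(\<integral>u. (\<integral>p. F u p \<partial>(lborel \<Otimes>\<^sub>M lborel)) \<partial>lborel) = (\<integral>p. (\<integral>u. F u p \<partial>lborel) \<partial>(lborel \<Otimes>\<^sub>M lborel))"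
    using Q.Fubini_integral[of F] intF by simp
  define G where "G = (\<lambda>\<xi> \<eta>::'a. phi t \<alpha> \<xi> * phi t \<alpha> \<eta> * cos (\<xi> \<bullet> v) *
      ((gam \<delta> DIM('a) (norm (\<eta> - \<xi>)) + gam \<delta> DIM('a) (norm (\<eta> - (- \<xi>)))) / 2))"
  have innerG: "(\<integral>u. F u p \<partial>lborel) = G (fst p) (snd p)" for p
  proof -
    obtain \<xi> \<eta> where p: "p = (\<xi>, \<eta>)" by (cases p)
    have g1: "has_bochner_integral lborel (\<lambda>u::'a. exp (- \<delta> * norm u ^ 2) * cos (\<xi> \<bullet> v + (\<eta> - \<xi>) \<bullet> u))
        (cos (\<xi> \<bullet> v) * gam \<delta> DIM('a) (norm (\<eta> - \<xi>)))"
      by (rule gaussDcos[OF d])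
    have g2: "has_bochner_integral lborel (\<lambda>u::'a. exp (- \<delta> * norm u ^ 2) * cos (\<xi> \<bullet> v + (- (\<xi> + \<eta>)) \<bullet> u))
        (cos (\<xi> \<bullet> v) * gam \<delta> DIM('a) (norm (- (\<xi> + \<eta>))))"
      by (rule gaussDcos[OF d])
    have "has_bochner_integral lborel (\<lambda>u::'a. (phi t \<alpha> \<xi> * phi t \<alpha> \<eta> / 2) *
        (exp (- \<delta> * norm u ^ 2) * cos (\<xi> \<bullet> v + (\<eta> - \<xi>) \<bullet> u) + exp (- \<delta> * norm u ^ 2) * cos (\<xi> \<bullet> v + (- (\<xi> + \<eta>)) \<bullet> u)))
        ((phi t \<alpha> \<xi> * phi t \<alpha> \<eta> / 2) * (cos (\<xi> \<bullet> v) * gam \<delta> DIM('a) (norm (\<eta> - \<xi>)) + cos (\<xi> \<bullet> v) * gam \<delta> DIM('a) (norm (- (\<xi> + \<eta>)))))"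
      by (intro has_bochner_integral_mult_right has_bochner_integral_add g1 g2)
    note H = this
    have E: "(\<lambda>u::'a. (phi t \<alpha> \<xi> * phi t \<alpha> \<eta> / 2) *
        (exp (- \<delta> * norm u ^ 2) * cos (\<xi> \<bullet> v + (\<eta> - \<xi>) \<bullet> u) + exp (- \<delta> * norm u ^ 2) * cos (\<xi> \<bullet> v + (- (\<xi> + \<eta>)) \<bullet> u)))
        = (\<lambda>u. F u p)"
    proof (rule ext)
      fix u :: 'a
      have c: "cos (\<xi> \<bullet> (v - u)) * cos (\<eta> \<bullet> u) =
        (cos (\<xi> \<bullet> v + (\<eta> - \<xi>) \<bullet> u) + cos (\<xi> \<bullet> v + (- (\<xi> + \<eta>)) \<bullet> u)) / 2"
        by (rule cos_prod_id)
      have "F u p = phi t \<alpha> \<xi> * phi t \<alpha> \<eta> * (cos (\<xi> \<bullet> (v - u)) * cos (\<eta> \<bullet> u)) * exp (- \<delta> * norm u ^ 2)"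
        by (simp add: F_def p mult.assoc)
      then show "(phi t \<alpha> \<xi> * phi t \<alpha> \<eta> / 2) *
        (exp (- \<delta> * norm u ^ 2) * cos (\<xi> \<bullet> v + (\<eta> - \<xi>) \<bullet> u) + exp (- \<delta> * norm u ^ 2) * cos (\<xi> \<bullet> v + (- (\<xi> + \<eta>)) \<bullet> u))
        = F u p"
        unfolding c by (simp add: field_simps)
    qed
    have X: "(phi t \<alpha> \<xi> * phi t \<alpha> \<eta> / 2) * (cos (\<xi> \<bullet> v) * gam \<delta> DIM('a) (norm (\<eta> - \<xi>)) + cos (\<xi> \<bullet> v) * gam \<delta> DIM('a) (norm (- (\<xi> + \<eta>))))
        = G (fst p) (snd p)"
    proof -
      have "norm (- (\<xi> + \<eta>)) = norm (\<eta> - (- \<xi>))"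
        by (metis norm_minus_cancel add.commute diff_minus_eq_add)
      then show ?thesis unfolding p G_def by (simp add: field_simps)
    qed
    have "has_bochner_integral lborel (\<lambda>u. F u p) (G (fst p) (snd p))"
      using H unfolding E X .
    then show ?thesis by (rule has_bochner_integral_integral_eq)
  qed
  have intG: "integrable (lborel \<Otimes>\<^sub>M lborel) (\<lambda>(\<xi>, \<eta>). G \<xi> \<eta>)"
  proof -
    have "integrable (lborel \<Otimes>\<^sub>M lborel) (\<lambda>p. \<integral>u. F u p \<partial>lborel)"
      by (rule Q.integrable_snd) (use intF in simp)
    moreover have "(\<lambda>p. \<integral>u. F u p \<partial>lborel) = (\<lambda>(\<xi>, \<eta>). G \<xi> \<eta>)"
      by (auto simp: innerG fun_eq_iff)
    ultimately show ?thesis by simp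
  qed
  have step3: "(\<integral>p. (\<integral>u. F u p \<partial>lborel) \<partial>(lborel \<Otimes>\<^sub>M lborel)) = (\<integral>\<xi>. (\<integral>\<eta>. G \<xi> \<eta> \<partial>lborel) \<partial>lborel)"
  proof -
    have "(\<lambda>p. \<integral>u. F u p \<partial>lborel) = (\<lambda>(\<xi>, \<eta>). G \<xi> \<eta>)"
      by (auto simp: innerG fun_eq_iff)
    then show ?thesis using lborel_pair.integral_fst[OF intG] by simp
  qed
  have step4: "(\<integral>\<eta>. G \<xi> \<eta> \<partial>lborel) = phi t \<alpha> \<xi> * cos (\<xi> \<bullet> v) * ((Aconv t \<alpha> \<delta> \<xi> + Aconv t \<alpha> \<delta> (- \<xi>)) / 2) / C" for \<xi>
  proof -
    have i1: "integrable lborel (\<lambda>\<eta>::'a. phi t \<alpha> \<eta> * gam \<delta> DIM('a) (norm (\<eta> - \<xi>)))"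
      by (rule int_phi_gam[OF t a d])
    have i2: "integrable lborel (\<lambda>\<eta>::'a. phi t \<alpha> \<eta> * gam \<delta> DIM('a) (norm (\<eta> - (- \<xi>))))"
      by (rule int_phi_gam[OF t a d])
    have "(\<lambda>\<eta>. G \<xi> \<eta>) = (\<lambda>\<eta>. (phi t \<alpha> \<xi> * cos (\<xi> \<bullet> v) / 2) *
        (phi t \<alpha> \<eta> * gam \<delta> DIM('a) (norm (\<eta> - \<xi>)) + phi t \<alpha> \<eta> * gam \<delta> DIM('a) (norm (\<eta> - (- \<xi>)))))"
      by (rule ext) (simp add: G_def field_simps)
    then have "(\<integral>\<eta>. G \<xi> \<eta> \<partial>lborel) = (phi t \<alpha> \<xi> * cos (\<xi> \<bullet> v) / 2) *
        ((\<integral>\<eta>. phi t \<alpha> \<eta> * gam \<delta> DIM('a) (norm (\<eta> - \<xi>)) \<partial>lborel) + (\<integral>\<eta>. phi t \<alpha> \<eta> * gam \<delta> DIM('a) (norm (\<eta> - (- \<xi>))) \<partial>lborel))"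
      using Bochner_Integration.integral_add[OF i1 i2] by simp
    also have "\<dots> = (phi t \<alpha> \<xi> * cos (\<xi> \<bullet> v) / 2) * ((Aconv t \<alpha> \<delta> \<xi> + Aconv t \<alpha> \<delta> (- \<xi>)) / C)"
      unfolding Aconv_def C_def[symmetric] using C by (simp add: field_simps)
    finally show ?thesis by simp
  qed
  have "(\<integral>u. stable_hk \<alpha> t (v - u) * stable_hk \<alpha> t u * exp (- \<delta> * norm u ^ 2) \<partial>lborel)
      = C^2 * (\<integral>\<xi>. phi t \<alpha> \<xi> * cos (\<xi> \<bullet> v) * ((Aconv t \<alpha> \<delta> \<xi> + Aconv t \<alpha> \<delta> (- \<xi>)) / 2) / C \<partial>lborel)"
    unfolding step1 step2 step3 step4 ..
  also have "\<dots> = C * (\<integral>\<xi>. phi t \<alpha> \<xi> * cos (\<xi> \<bullet> v) * ((Aconv t \<alpha> \<delta> \<xi> + Aconv t \<alpha> \<delta> (- \<xi>)) / 2) \<partial>lborel)"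
    using C by (simp add: integral_divide_zero power2_eq_square)
  finally show ?thesis unfolding C_def .
qed

lemma integral_affine:
  fixes g :: "'a::euclidean_space \<Rightarrow> real" and c :: real and b :: 'a
  assumes c: "c \<noteq> 0" and g[measurable]: "g \<in> borel_measurable borel"
  shows "(\<integral>x. g x \<partial>lborel) = \<bar>c\<bar> ^ DIM('a) * (\<integral>\<zeta>. g (b + c *\<^sub>R \<zeta>) \<partial>lborel)"
proof -
  have "integral\<^sup>L (density (distr lborel borel (\<lambda>x. b + c *\<^sub>R x)) (\<lambda>_. ennreal (\<bar>c\<bar> ^ DIM('a)))) g
      = integral\<^sup>L (distr lborel borel (\<lambda>x. b + c *\<^sub>R x)) (\<lambda>x. \<bar>c\<bar> ^ DIM('a) *\<^sub>R g x)"
    by (rule integral_density) auto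
  also have "\<dots> = (\<integral>\<zeta>. \<bar>c\<bar> ^ DIM('a) *\<^sub>R g (b + c *\<^sub>R \<zeta>) \<partial>lborel)"
    by (rule integral_distr) auto
  finally have "integral\<^sup>L (density (distr lborel borel (\<lambda>x. b + c *\<^sub>R x)) (\<lambda>_. ennreal (\<bar>c\<bar> ^ DIM('a)))) g
      = \<bar>c\<bar> ^ DIM('a) * (\<integral>\<zeta>. g (b + c *\<^sub>R \<zeta>) \<partial>lborel)" by simp
  moreover have "density (distr lborel borel (\<lambda>x. b + c *\<^sub>R x)) (\<lambda>_. ennreal (\<bar>c\<bar> ^ DIM('a))) = (lborel :: 'a measure)"
    using lborel_affine[OF c, of b] by (simp add: ennreal_power)
  ultimately show ?thesis by simp
qed

lemma Aconv_repr:
  assumes t: "t > 0" and a: "\<alpha> > 0" and d: "\<delta> > 0"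
  shows "Aconv t \<alpha> \<delta> (\<xi>::'a::euclidean_space) = (1 / sqrt pi ^ DIM('a)) *
     (\<integral>\<zeta>. phi t \<alpha> (\<xi> + (2 * sqrt \<delta>) *\<^sub>R \<zeta>) * exp (- 1 * norm \<zeta> ^ 2) \<partial>lborel)"
proof -
  define s where "s = 2 * sqrt \<delta>"
  have s: "s > 0" using d by (simp add: s_def)
  have "(\<integral>\<eta>. phi t \<alpha> \<eta> * gam \<delta> DIM('a) (norm (\<eta> - \<xi>)) \<partial>lborel)
     = \<bar>s\<bar> ^ DIM('a) * (\<integral>\<zeta>. phi t \<alpha> (\<xi> + s *\<^sub>R \<zeta>) * gam \<delta> DIM('a) (norm ((\<xi> + s *\<^sub>R \<zeta>) - \<xi>)) \<partial>lborel)"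
    by (rule integral_affine) (use s in auto)
  also have "(\<lambda>\<zeta>. phi t \<alpha> (\<xi> + s *\<^sub>R \<zeta>) * gam \<delta> DIM('a) (norm ((\<xi> + s *\<^sub>R \<zeta>) - \<xi>)))
      = (\<lambda>\<zeta>. sqrt (pi / \<delta>) ^ DIM('a) * (phi t \<alpha> (\<xi> + s *\<^sub>R \<zeta>) * exp (- 1 * norm \<zeta> ^ 2)))"
  proof (rule ext)
    fix \<zeta> :: 'a
    have "norm ((\<xi> + s *\<^sub>R \<zeta>) - \<xi>) ^ 2 / (4 * \<delta>) = norm \<zeta> ^ 2"
      using s d by (simp add: s_def power_mult_distrib)
    then show "phi t \<alpha> (\<xi> + s *\<^sub>R \<zeta>) * gam \<delta> DIM('a) (norm ((\<xi> + s *\<^sub>R \<zeta>) - \<xi>))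
      = sqrt (pi / \<delta>) ^ DIM('a) * (phi t \<alpha> (\<xi> + s *\<^sub>R \<zeta>) * exp (- 1 * norm \<zeta> ^ 2))"
      unfolding gam_def by (simp add: minus_divide_left)
  qed
  finally have "(\<integral>\<eta>. phi t \<alpha> \<eta> * gam \<delta> DIM('a) (norm (\<eta> - \<xi>)) \<partial>lborel)
     = s ^ DIM('a) * sqrt (pi / \<delta>) ^ DIM('a) * (\<integral>\<zeta>. phi t \<alpha> (\<xi> + s *\<^sub>R \<zeta>) * exp (- 1 * norm \<zeta> ^ 2) \<partial>lborel)"
    using s by simp
  moreover have "(1 / (2 * pi) ^ DIM('a)) * (s ^ DIM('a) * sqrt (pi / \<delta>) ^ DIM('a)) = 1 / sqrt pi ^ DIM('a)"
  proof -
    have "s * sqrt (pi / \<delta>) / (2 * pi) = 1 / sqrt pi"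
      using d unfolding s_def by (simp add: real_sqrt_divide field_simps real_sqrt_mult[symmetric])
    then have "(s * sqrt (pi / \<delta>) / (2 * pi)) ^ DIM('a) = (1 / sqrt pi) ^ DIM('a)" by simp
    then show ?thesis by (simp add: power_mult_distrib power_divide)
  qed
  ultimately show ?thesis unfolding Aconv_def s_def[symmetric]
    by (metis (no_types, lifting) mult.assoc)
qed

lemma phi_abs_le1: "t \<ge> 0 \<Longrightarrow> \<bar>phi t \<alpha> \<xi>\<bar> \<le> 1"
  using phi_le1[of t \<alpha> \<xi>] phi_pos[of t \<alpha> \<xi>] by simp

lemma int_phi_shift_gauss:
  "integrable lborel (\<lambda>\<zeta>::'a::euclidean_space. phi t \<alpha> (\<xi> + s *\<^sub>R \<zeta>) * exp (- 1 * norm \<zeta> ^ 2))" if t: "t \<ge> 0"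
proof (rule Bochner_Integration.integrable_bound[where f="\<lambda>\<zeta>. exp (- 1 * norm \<zeta> ^ 2)"])
  show "integrable lborel (\<lambda>\<zeta>::'a. exp (- 1 * norm \<zeta> ^ 2))"
    using gauss_int[of 1, where 'a='a] by (simp add: has_bochner_integral_iff)
  show "AE \<zeta> in lborel. norm (phi t \<alpha> (\<xi> + s *\<^sub>R \<zeta>) * exp (- 1 * norm \<zeta> ^ 2)) \<le> norm (exp (- 1 * norm (\<zeta>::'a) ^ 2))"
    using phi_abs_le1[OF t] by (auto intro!: AE_I2 simp: abs_mult less_imp_le mult_left_le_one_le)
qed measurable

lemma Aconv_bounds:
  assumes t: "t > 0" and a: "\<alpha> > 0" and d: "\<delta> > 0"
  shows "0 \<le> Aconv t \<alpha> \<delta> (\<xi>::'a::euclidean_space)" and "Aconv t \<alpha> \<delta> \<xi> \<le> 1"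
proof -
  let ?s = "2 * sqrt \<delta>"
  have K: "(\<integral>\<zeta>. exp (- 1 * norm (\<zeta>::'a) ^ 2) \<partial>lborel) = sqrt pi ^ DIM('a)"
    using gauss_int[of 1, where 'a='a] by (simp add: has_bochner_integral_iff)
  have nn: "0 \<le> (\<integral>\<zeta>. phi t \<alpha> (\<xi> + ?s *\<^sub>R \<zeta>) * exp (- 1 * norm \<zeta> ^ 2) \<partial>lborel)"
    by (rule integral_nonneg_AE) (auto intro!: AE_I2 simp: phi_pos less_imp_le)
  have le: "(\<integral>\<zeta>. phi t \<alpha> (\<xi> + ?s *\<^sub>R \<zeta>) * exp (- 1 * norm \<zeta> ^ 2) \<partial>lborel) \<le> (\<integral>\<zeta>. exp (- 1 * norm (\<zeta>::'a) ^ 2) \<partial>lborel)"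
    apply (rule Bochner_Integration.integral_mono)
    using int_phi_shift_gauss[of t \<alpha> \<xi> ?s] t gauss_int[of 1, where 'a='a] phi_le1[of t] phi_pos
    by (auto simp: has_bochner_integral_iff less_imp_le mult_left_le_one_le)
  show "0 \<le> Aconv t \<alpha> \<delta> \<xi>" unfolding Aconv_repr[OF t a d] using nn by simp
  show "Aconv t \<alpha> \<delta> \<xi> \<le> 1" unfolding Aconv_repr[OF t a d] using le K nn
    by (simp add: divide_le_eq_1)
qed

lemma Aconv_lim:
  assumes t: "t > 0" and a: "\<alpha> > 0"
  shows "(\<lambda>n. Aconv t \<alpha> (1 / real (Suc n)) (\<xi>::'a::euclidean_space)) \<longlonglongrightarrow> phi t \<alpha> \<xi>"
proof -
  define s where "s = (\<lambda>n::nat. 2 * sqrt (1 / real (Suc n)))"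
  have s0: "s \<longlonglongrightarrow> 0"
  proof -
    have "(\<lambda>n. 1 / real (Suc n)) \<longlonglongrightarrow> 0" by (rule LIMSEQ_Suc[OF lim_const_over_n])
    from tendsto_mult[OF tendsto_const tendsto_real_sqrt[OF this], of 2] show ?thesis
      by (simp add: s_def)
  qed
  have K: "(\<integral>\<zeta>. exp (- 1 * norm (\<zeta>::'a) ^ 2) \<partial>lborel) = sqrt pi ^ DIM('a)"
    using gauss_int[of 1, where 'a='a] by (simp add: has_bochner_integral_iff)
  have cont: "isCont (phi t \<alpha>) x" for x :: 'a
    using phi_cont[OF a, of t, where 'a='a] by (simp add: continuous_on_eq_continuous_at)
  have "(\<lambda>n. \<integral>\<zeta>. phi t \<alpha> (\<xi> + s n *\<^sub>R \<zeta>) * exp (- 1 * norm \<zeta> ^ 2) \<partial>lborel)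
      \<longlonglongrightarrow> (\<integral>\<zeta>. phi t \<alpha> \<xi> * exp (- 1 * norm (\<zeta>::'a) ^ 2) \<partial>lborel)"
  proof (rule integral_dominated_convergence[where w="\<lambda>\<zeta>. exp (- 1 * norm \<zeta> ^ 2)"])
    show "integrable lborel (\<lambda>\<zeta>::'a. exp (- 1 * norm \<zeta> ^ 2))"
      using gauss_int[of 1, where 'a='a] by (simp add: has_bochner_integral_iff)
    show "AE \<zeta> in lborel. (\<lambda>n. phi t \<alpha> (\<xi> + s n *\<^sub>R \<zeta>) * exp (- 1 * norm \<zeta> ^ 2)) \<longlonglongrightarrow> phi t \<alpha> \<xi> * exp (- 1 * norm (\<zeta>::'a) ^ 2)"
    proof (rule AE_I2)
      fix \<zeta> :: 'a
      have "(\<lambda>n. \<xi> + s n *\<^sub>R \<zeta>) \<longlonglongrightarrow> \<xi> + 0 *\<^sub>R \<zeta>"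
        by (intro tendsto_intros s0)
      then have "(\<lambda>n. \<xi> + s n *\<^sub>R \<zeta>) \<longlonglongrightarrow> \<xi>" by simp
      from isCont_tendsto_compose[OF cont this]
      show "(\<lambda>n. phi t \<alpha> (\<xi> + s n *\<^sub>R \<zeta>) * exp (- 1 * norm \<zeta> ^ 2)) \<longlonglongrightarrow> phi t \<alpha> \<xi> * exp (- 1 * norm \<zeta> ^ 2)"
        by (intro tendsto_mult tendsto_const)
    qed
    show "AE \<zeta> in lborel. norm (phi t \<alpha> (\<xi> + s n *\<^sub>R \<zeta>) * exp (- 1 * norm \<zeta> ^ 2)) \<le> exp (- 1 * norm (\<zeta>::'a) ^ 2)" for n
      using phi_abs_le1[of t] t by (auto intro!: AE_I2 simp: abs_mult less_imp_le mult_left_le_one_le)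
  qed measurable
  then have "(\<lambda>n. (1 / sqrt pi ^ DIM('a)) * (\<integral>\<zeta>. phi t \<alpha> (\<xi> + s n *\<^sub>R \<zeta>) * exp (- 1 * norm \<zeta> ^ 2) \<partial>lborel))
      \<longlonglongrightarrow> (1 / sqrt pi ^ DIM('a)) * (phi t \<alpha> \<xi> * sqrt pi ^ DIM('a))"
    unfolding integral_mult_right_zero K by (rule tendsto_mult[OF tendsto_const])
  moreover have "Aconv t \<alpha> (1 / real (Suc n)) \<xi> = (1 / sqrt pi ^ DIM('a)) * (\<integral>\<zeta>. phi t \<alpha> (\<xi> + s n *\<^sub>R \<zeta>) * exp (- 1 * norm \<zeta> ^ 2) \<partial>lborel)" for n
    unfolding s_def by (rule Aconv_repr[OF t a]) simp
  ultimately show ?thesis by simp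
qed

lemma Aconv_meas[measurable]: "(\<lambda>\<xi>::'a::euclidean_space. Aconv t \<alpha> \<delta> \<xi>) \<in> borel_measurable borel"
  unfolding Aconv_def by measurable

lemma J_lim:
  fixes v :: "'a::euclidean_space"
  assumes t: "t > 0" and a: "\<alpha> > 0"
  shows "(\<lambda>n. (1 / (2 * pi) ^ DIM('a)) * (\<integral>\<xi>. phi t \<alpha> \<xi> * cos (\<xi> \<bullet> v) *
      ((Aconv t \<alpha> (1 / real (Suc n)) \<xi> + Aconv t \<alpha> (1 / real (Suc n)) (- \<xi>)) / 2) \<partial>lborel))
    \<longlonglongrightarrow> stable_hk \<alpha> (2 * t) v"
proof -
  have "(\<lambda>n. \<integral>\<xi>. phi t \<alpha> \<xi> * cos (\<xi> \<bullet> v) *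
      ((Aconv t \<alpha> (1 / real (Suc n)) \<xi> + Aconv t \<alpha> (1 / real (Suc n)) (- \<xi>)) / 2) \<partial>lborel)
    \<longlonglongrightarrow> (\<integral>\<xi>. phi t \<alpha> \<xi> * cos (\<xi> \<bullet> v) * ((phi t \<alpha> \<xi> + phi t \<alpha> (- \<xi>)) / 2) \<partial>lborel)"
  proof (rule integral_dominated_convergence[where w="phi t \<alpha>"])
    show "integrable lborel (phi t \<alpha> :: 'a \<Rightarrow> real)" by (rule phi_int[OF t a])
    show "AE \<xi> in lborel. (\<lambda>n. phi t \<alpha> \<xi> * cos (\<xi> \<bullet> v) *
      ((Aconv t \<alpha> (1 / real (Suc n)) \<xi> + Aconv t \<alpha> (1 / real (Suc n)) (- \<xi>)) / 2))
      \<longlonglongrightarrow> phi t \<alpha> \<xi> * cos (\<xi> \<bullet> v) * ((phi t \<alpha> \<xi> + phi t \<alpha> (- \<xi>)) / 2)"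
      by (intro AE_I2 tendsto_intros Aconv_lim[OF t a]) simp
    show "AE \<xi> in lborel. norm (phi t \<alpha> \<xi> * cos (\<xi> \<bullet> v) *
      ((Aconv t \<alpha> (1 / real (Suc n)) \<xi> + Aconv t \<alpha> (1 / real (Suc n)) (- \<xi>)) / 2)) \<le> phi t \<alpha> \<xi>" for n
    proof (rule AE_I2)
      fix \<xi> :: 'a
      have d: "1 / real (Suc n) > 0" by simp
      have b: "\<bar>(Aconv t \<alpha> (1 / real (Suc n)) \<xi> + Aconv t \<alpha> (1 / real (Suc n)) (- \<xi>)) / 2\<bar> \<le> 1"
        using Aconv_bounds[OF t a d, of \<xi>] Aconv_bounds[OF t a d, of "- \<xi>"] by simp
      have c: "\<bar>cos (\<xi> \<bullet> v)\<bar> \<le> 1" by simp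
      have "\<bar>cos (\<xi> \<bullet> v)\<bar> * \<bar>(Aconv t \<alpha> (1 / real (Suc n)) \<xi> + Aconv t \<alpha> (1 / real (Suc n)) (- \<xi>)) / 2\<bar> \<le> 1"
        using mult_mono[OF c b] by simp
      then show "norm (phi t \<alpha> \<xi> * cos (\<xi> \<bullet> v) *
        ((Aconv t \<alpha> (1 / real (Suc n)) \<xi> + Aconv t \<alpha> (1 / real (Suc n)) (- \<xi>)) / 2)) \<le> phi t \<alpha> \<xi>"
        using phi_pos[of t \<alpha> \<xi>] by (simp add: abs_mult mult.assoc mult_left_le)
    qed
  qed measurable
  moreover have "(\<lambda>\<xi>. phi t \<alpha> \<xi> * cos (\<xi> \<bullet> v) * ((phi t \<alpha> \<xi> + phi t \<alpha> (- \<xi>)) / 2)) = (\<lambda>\<xi>. phi (2 * t) \<alpha> \<xi> * cos (\<xi> \<bullet> v))"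
    by (rule ext) (simp add: phi_minus phi_sq[symmetric])
  ultimately have L: "(\<lambda>n. \<integral>\<xi>. phi t \<alpha> \<xi> * cos (\<xi> \<bullet> v) *
      ((Aconv t \<alpha> (1 / real (Suc n)) \<xi> + Aconv t \<alpha> (1 / real (Suc n)) (- \<xi>)) / 2) \<partial>lborel)
    \<longlonglongrightarrow> (\<integral>\<xi>. phi (2 * t) \<alpha> \<xi> * cos (\<xi> \<bullet> v) \<partial>lborel)"
    by (simp only:)
  show ?thesis unfolding hk_phi[of \<alpha> "2 * t"]
    by (rule tendsto_mult[OF tendsto_const L])
qed

lemma main_u:
  fixes v :: "'a::euclidean_space"
  assumes t: "t > 0" and a: "0 < \<alpha>" "\<alpha> < 2"
  shows "2 * (\<integral>u. indicator (ball 0 (norm v / 2)) u * (stable_hk \<alpha> t (v - u) * stable_hk \<alpha> t u) \<partial>lborel)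
    \<le> stable_hk \<alpha> (2 * t) v"
proof -
  define r where "r = norm v / 2"
  define P where "P = (stable_hk \<alpha> t :: 'a \<Rightarrow> real)"
  define M where "M = (1 / (2 * pi) ^ DIM('a)) * (\<integral>\<xi>. phi t \<alpha> (\<xi>::'a) \<partial>lborel)"
  define g where "g = (\<lambda>u. P (v - u) * P u)"
  define H where "H = (\<lambda>u. indicator (ball 0 r) u + indicator (ball v r) u :: real)"
  define e where "e = (\<lambda>n::nat. \<lambda>u::'a. exp (- (1 / real (Suc n)) * norm u ^ 2))"
  have Pnn: "0 \<le> P w" for w unfolding P_def by (rule hk_nonneg[OF t a])
  have PM: "P w \<le> M" for w using hk_bound[OF t a(1), of w] Pnn[of w] unfolding P_def M_def by simp
  have M0: "0 \<le> M" using Pnn[of 0] PM[of 0] by simp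
  have Pm[measurable]: "P \<in> borel_measurable borel" unfolding P_def by measurable
  have gm[measurable]: "g \<in> borel_measurable borel" unfolding g_def by measurable
  have gnn: "0 \<le> g u" for u unfolding g_def using Pnn by simp
  have gM: "g u \<le> M * M" for u unfolding g_def using Pnn PM M0 by (simp add: mult_mono)
  have Hm[measurable]: "H \<in> borel_measurable borel" unfolding H_def by (intro borel_measurable_add borel_measurable_indicator borel_open open_ball)
  have Hnn: "0 \<le> H u" for u unfolding H_def by simp
  have H1: "H u \<le> 1" for u
  proof -
    have "\<not> (u \<in> ball 0 r \<and> u \<in> ball v r)"
    proof
      assume "u \<in> ball 0 r \<and> u \<in> ball v r"
      then have "norm u < r" "norm (v - u) < r" by (auto simp: dist_norm)
      moreover have "norm v \<le> norm u + norm (v - u)" using norm_triangle_ineq[of u "v - u"] by simp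
      ultimately show False unfolding r_def by simp
    qed
    then show ?thesis unfolding H_def by (auto simp: indicator_def)
  qed
  have ei: "integrable lborel (e n)" for n
    unfolding e_def using gauss_int[of "1 / real (Suc n)", where 'a='a] by (simp add: has_bochner_integral_iff)
  have em[measurable]: "e n \<in> borel_measurable borel" for n unfolding e_def by measurable
  have e01: "0 \<le> e n u" "e n u \<le> 1" for n u unfolding e_def by auto
  have gei: "integrable lborel (\<lambda>u. g u * e n u)" for n
  proof (rule Bochner_Integration.integrable_bound[where f="\<lambda>u. M * M * e n u"])
    show "integrable lborel (\<lambda>u. M * M * e n u)" using ei by simp
    show "AE x in lborel. norm (g x * e n x) \<le> norm (M * M * e n x)"
      using gnn gM e01 by (auto intro!: AE_I2 mult_right_mono simp: abs_mult)
  qed measurable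
  have indm: "(indicator (ball c r) :: 'a \<Rightarrow> real) \<in> borel_measurable borel" for c
    by (intro borel_measurable_indicator borel_open open_ball)
  have ib: "integrable lborel (indicator (ball c r) :: 'a \<Rightarrow> real)" for c
    by (rule integrable_real_indicator) (simp, rule emeasure_lborel_ball_finite)
  have hi: "integrable lborel (\<lambda>u. H u * (M * M))"
    unfolding H_def distrib_right by (intro Bochner_Integration.integrable_add integrable_mult_left ib)
  have step1: "(\<integral>u. H u * g u * e n u \<partial>lborel) \<le> (\<integral>u. g u * e n u \<partial>lborel)" for n
  proof (rule integral_mono')
    show "integrable lborel (\<lambda>u. g u * e n u)" by (rule gei)
    fix u :: 'a
    have "0 \<le> g u * e n u" using gnn e01 by simp
    then show "H u * g u * e n u \<le> g u * e n u"
      using mult_left_le_one_le[of "g u * e n u" "H u"] Hnn H1 by (simp add: mult.assoc)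
    show "0 \<le> g u * e n u" using gnn e01 by simp
  qed
  have step2: "(\<lambda>n. \<integral>u. g u * e n u \<partial>lborel) \<longlonglongrightarrow> stable_hk \<alpha> (2 * t) v"
  proof -
    have "(\<integral>u. g u * e n u \<partial>lborel) = (1 / (2 * pi) ^ DIM('a)) * (\<integral>\<xi>. phi t \<alpha> \<xi> * cos (\<xi> \<bullet> v) *
      ((Aconv t \<alpha> (1 / real (Suc n)) \<xi> + Aconv t \<alpha> (1 / real (Suc n)) (- \<xi>)) / 2) \<partial>lborel)" for n
      unfolding g_def e_def P_def by (rule J_formula[OF t a(1)]) simp
    then show ?thesis using J_lim[OF t a(1), of v] by simp
  qed
  have step3: "(\<lambda>n. \<integral>u. H u * g u * e n u \<partial>lborel) \<longlonglongrightarrow> (\<integral>u. H u * g u \<partial>lborel)"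
  proof (rule integral_dominated_convergence[where w="\<lambda>u. H u * (M * M)"])
    show "integrable lborel (\<lambda>u. H u * (M * M))" by (rule hi)
    show "AE u in lborel. (\<lambda>n. H u * g u * e n u) \<longlonglongrightarrow> H u * g u"
    proof (rule AE_I2)
      fix u :: 'a
      have z: "(\<lambda>n. 1 / real (Suc n)) \<longlonglongrightarrow> 0" by (rule LIMSEQ_Suc[OF lim_const_over_n])
      have "(\<lambda>n. e n u) \<longlonglongrightarrow> exp (- 0 * norm u ^ 2)"
        unfolding e_def by (rule tendsto_exp[OF tendsto_mult[OF tendsto_minus[OF z] tendsto_const]])
      from tendsto_mult[OF tendsto_const this, of "H u * g u"]
      show "(\<lambda>n. H u * g u * e n u) \<longlonglongrightarrow> H u * g u" by simp
    qed
    show "AE u in lborel. norm (H u * g u * e n u) \<le> H u * (M * M)" for n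
      using Hnn gnn gM e01
      by (auto intro!: AE_I2 mult_left_mono mult_left_le_one_le mult_nonneg_nonneg simp: abs_mult mult.assoc
               intro: order.trans[OF mult_right_le_one_le])
  qed measurable
  have le: "(\<integral>u. H u * g u \<partial>lborel) \<le> stable_hk \<alpha> (2 * t) v"
    using step1 step2 step3 by (intro LIMSEQ_le) auto
  have i0: "integrable lborel (\<lambda>u. indicator (ball 0 r) u * g u)"
    by (rule Bochner_Integration.integrable_bound[OF integrable_mult_left[OF ib[of 0]], of _ "M * M"])
       (use gnn gM in \<open>auto intro!: AE_I2 simp: indicator_def\<close>)
  have iv: "integrable lborel (\<lambda>u. indicator (ball v r) u * g u)"
    by (rule Bochner_Integration.integrable_bound[OF integrable_mult_left[OF ib[of v]], of _ "M * M"])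
       (use gnn gM in \<open>auto intro!: AE_I2 simp: indicator_def\<close>)
  have split: "(\<integral>u. H u * g u \<partial>lborel) = (\<integral>u. indicator (ball 0 r) u * g u \<partial>lborel) + (\<integral>u. indicator (ball v r) u * g u \<partial>lborel)"
    unfolding H_def distrib_right by (rule Bochner_Integration.integral_add[OF i0 iv])
  have refl: "(\<integral>u. indicator (ball v r) u * g u \<partial>lborel) = (\<integral>u. indicator (ball 0 r) u * g u \<partial>lborel)"
  proof -
    have "(\<integral>u. indicator (ball v r) u * g u \<partial>lborel) = \<bar>- 1\<bar> ^ DIM('a) * (\<integral>\<zeta>. indicator (ball v r) (v + (- 1) *\<^sub>R \<zeta>) * g (v + (- 1) *\<^sub>R \<zeta>) \<partial>lborel)"
      by (rule integral_affine[OF _ borel_measurable_times[OF indm gm]]) simp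
    also have "(\<lambda>\<zeta>. indicator (ball v r) (v + (- 1) *\<^sub>R \<zeta>) * g (v + (- 1) *\<^sub>R \<zeta>)) = (\<lambda>\<zeta>. indicator (ball 0 r) \<zeta> * g \<zeta>)"
      by (rule ext) (simp add: g_def indicator_def dist_norm mult.commute)
    finally show ?thesis by simp
  qed
  have "2 * (\<integral>u. indicator (ball 0 r) u * g u \<partial>lborel) \<le> stable_hk \<alpha> (2 * t) v"
    using le unfolding split refl by simp
  then show ?thesis unfolding g_def P_def r_def .
qed

theorem lemma3p3:
  fixes \<alpha> t :: real and x y :: "'a::euclidean_space"
  assumes "0 < \<alpha>" and "\<alpha> < real DIM('a)" and "\<alpha> < 2"
    and "0 < t"
  shows "(LINT z : ball y (dist x y / 2) | lborel.
            stable_hk2 \<alpha> t x z * stable_hk2 \<alpha> t z y)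
         \<le> stable_hk2 \<alpha> (2 * t) x y / 2"
proof -
  define v where "v = x - y"
  define r where "r = dist x y / 2"
  have r: "r = norm v / 2" by (simp add: r_def v_def dist_norm)
  have m[measurable]: "(\<lambda>z. indicator (ball y r) z * (stable_hk \<alpha> t (x - z) * stable_hk \<alpha> t (z - y))) \<in> borel_measurable borel"
    by (intro borel_measurable_times borel_measurable_indicator borel_open open_ball) measurable
  have "(LINT z : ball y r | lborel. stable_hk2 \<alpha> t x z * stable_hk2 \<alpha> t z y)
      = (\<integral>z. indicator (ball y r) z * (stable_hk \<alpha> t (x - z) * stable_hk \<alpha> t (z - y)) \<partial>lborel)"
    by (simp add: set_lebesgue_integral_def stable_hk2_def)
  also have "\<dots> = \<bar>1\<bar> ^ DIM('a) * (\<integral>u. indicator (ball y r) (y + 1 *\<^sub>R u) * (stable_hk \<alpha> t (x - (y + 1 *\<^sub>R u)) * stable_hk \<alpha> t ((y + 1 *\<^sub>R u) - y)) \<partial>lborel)"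
    by (rule integral_affine[OF _ m]) simp
  also have "\<dots> = (\<integral>u. indicator (ball 0 (norm v / 2)) u * (stable_hk \<alpha> t (v - u) * stable_hk \<alpha> t u) \<partial>lborel)"
    by (simp add: r v_def indicator_def dist_norm algebra_simps)
  finally have eq: "(LINT z : ball y r | lborel. stable_hk2 \<alpha> t x z * stable_hk2 \<alpha> t z y)
      = (\<integral>u. indicator (ball 0 (norm v / 2)) u * (stable_hk \<alpha> t (v - u) * stable_hk \<alpha> t u) \<partial>lborel)" .
  have "2 * (\<integral>u. indicator (ball 0 (norm v / 2)) u * (stable_hk \<alpha> t (v - u) * stable_hk \<alpha> t u) \<partial>lborel)
    \<le> stable_hk \<alpha> (2 * t) v"
    by (rule main_u) (use assms in auto)
  then show ?thesis unfolding r_def[symmetric] eq by (simp add: stable_hk2_def v_def)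
qed


end
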